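(* Let $n\ge 3$ and let $s,t\in\{-1,1\}^{n}$ with $s\neq t$ and $\sharp_{n}(s)=\sharp_{n}(t)$. Let $(\beta_{1},\beta_{2})\in(0,1)^2$ satisfy $\beta_{1}+\beta_{2}>1$ and \[ \sum_{k=1}^{n}\Big(s_{k}\beta_{1}^{\sharp_{k}(s)}\beta_{2}^{\tilde\sharp_{k}(s)}-t_{k}\beta_{1}^{\sharp_{k}(t)}\beta_{2}^{\tilde\sharp_{k}(t)}\Big)=0 .\] Then there is a $p\in(0,1)$ such that $SD^{p}_{\beta_{1},\beta_{2}}>1$, but the measure $\mu^{p}_{\beta_{1},\beta_{2}}$ is singular (with respect to Lebesgue measure) and $\dim_{H}\mu^{p}_{\beta_{1},\beta_{2}}<1$.
   Context: For $\beta_{1},\beta_{2}\in(0,1)$ let $T_{1}(x)=\beta_{1}x+\beta_{1}$ and $T_{2}(x)=\beta_{2}x-\beta_{2}$ on $\mathbb{R}$. For $p\in(0,1)$, $\mu^{p}_{\beta_{1},\beta_{2}}$ denotes the unique Borel probability measure on $\mathbb{R}$ with $\mu^{p}_{\beta_{1},\beta_{2}}=p\,T_{1}(\mu^{p}_{\beta_{1},\beta_{2}})+(1-p)\,T_{2}(\mu^{p}_{\beta_{1},\beta_{2}})$, where $T_i(\mu)$ is the push-forward $\mu\circ T_i^{-1}$. The similarity dimension is \[ SD^{p}_{\beta_{1},\beta_{2}}=\frac{-p\log p-(1-p)\log(1-p)}{-p\log\beta_{1}-(1-p)\log\beta_{2}}.\] For $s\in\{-1,1\}^{n}$ and $1\le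 k\le n$, $\sharp_{k}(s)$ is the number of entries of $(s_{1},\dots,s_{k})$ equal to $1$ and $\tilde\sharp_{k}(s)=k-\sharp_{k}(s)$. Equivalently, $(\beta_1,\beta_2)$ lies on the algebraic curve $c_{s,t}=\{(x,y):\sum_{k=1}^{n}(s_{k}x^{\sharp_{k}(s)}y^{\tilde\sharp_{k}(s)}-t_{k}x^{\sharp_{k}(t)}y^{\tilde\sharp_{k}(t)})=0\}$. The Hausdorff dimension of a measure $\mu$ is $\dim_H\mu=\inf\{\dim_H A: A \text{ Borel}, \mu(A)=1\}$. *)

theory Defs
  imports "HOL-Analysis.Analysis"
begin

definition T1 :: "real \<Rightarrow> real \<Rightarrow> real" where
  "T1 b1 x = b1 * x + b1"

definition T2 :: "real \<Rightarrow> real \<Rightarrow> real" where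
  "T2 b2 x = b2 * x - b2"

definition is_selfsim :: "real \<Rightarrow> real \<Rightarrow> real \<Rightarrow> real measure \<Rightarrow> bool" where
  "is_selfsim b1 b2 p M \<longleftrightarrow>
     sets M = sets borel \<and> emeasure M (space M) = 1 \<and>
     (\<forall>A \<in> sets borel.
        emeasure M A = ennreal p * emeasure (distr M borel (T1 b1)) A
                     + ennreal (1 - p) * emeasure (distr M borel (T2 b2)) A)"

definition selfsim_measure :: "real \<Rightarrow> real \<Rightarrow> real \<Rightarrow> real measure" where
  "selfsim_measure b1 b2 p = (THE M. is_selfsim b1 b2 p M)"

definition sim_dim :: "real \<Rightarrow> real \<Rightarrow> real \<Rightarrow> real" where
  "sim_dim b1 b2 p =
     (- p * ln p - (1 - p) * ln (1 - p)) / (- p * ln b1 - (1 - p) * ln b2)"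

definition hausdorff_pre :: "real \<Rightarrow> real \<Rightarrow> real set \<Rightarrow> ennreal" where
  "hausdorff_pre s \<delta> A =
     (INF U \<in> {U :: nat \<Rightarrow> real set. A \<subseteq> (\<Union>i. U i) \<and> (\<forall>i. diameter (U i) \<le> \<delta>)}.
        (\<Sum>i. ennreal (diameter (U i) powr s)))"

definition hausdorff_measure :: "real \<Rightarrow> real set \<Rightarrow> ennreal" where
  "hausdorff_measure s A = (SUP \<delta> \<in> {0<..}. hausdorff_pre s \<delta> A)"

definition hausdorff_dim :: "real set \<Rightarrow> ereal" where
  "hausdorff_dim A = Inf {ereal s | s. 0 \<le> s \<and> hausdorff_measure s A = 0}"

definition hausdorff_dim_measure :: "real measure \<Rightarrow> ereal" where
  "hausdorff_dim_measure M =
     Inf {hausdorff_dim A | A. A \<in> sets borel \<and> emeasure M A = 1}"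

definition singular_lebesgue :: "real measure \<Rightarrow> bool" where
  "singular_lebesgue M \<longleftrightarrow>
     (\<exists>A \<in> sets borel. emeasure M A = 0 \<and> emeasure lborel (UNIV - A) = 0)"

definition sharp :: "(nat \<Rightarrow> int) \<Rightarrow> nat \<Rightarrow> nat" where
  "sharp s k = card {j \<in> {1..k}. s j = 1}"

definition sharp_tilde :: "(nat \<Rightarrow> int) \<Rightarrow> nat \<Rightarrow> nat" where
  "sharp_tilde s k = k - sharp s k"

end

theory Submission
  imports Defs "HOL-Probability.Probability" "HOL-Real_Asymp.Real_Asymp"
begin


fun Rho :: "('c \<Rightarrow> real) \<Rightarrow> 'c list \<Rightarrow> real" where
  "Rho rh [] = 1" | "Rho rh (c#w) = rh c * Rho rh w"

fun Off :: "('c \<Rightarrow> real) \<Rightarrow> ('c \<Rightarrow> real) \<Rightarrow> 'c list \<Rightarrow> real" where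
  "Off rh tr [] = 0" | "Off rh tr (c#w) = rh c * Off rh tr w + tr c"

lemma Rho_snoc: "Rho rh (w @ [a]) = Rho rh w * rh a"
  by (induction w) auto

lemma Off_snoc: "Off rh tr (w @ [a]) = Off rh tr w + Rho rh w * tr a"
  by (induction w) (auto simp: algebra_simps)

definition words :: "'c set \<Rightarrow> nat \<Rightarrow> 'c list set" where
  "words C k = {w. set w \<subseteq> C \<and> length w = k}"

lemma words_0: "words C 0 = {[]}"
  by (auto simp: words_def)

lemma words_Suc: "words C (Suc k) = (\<lambda>(c,w). c#w) ` (C \<times> words C k)"
  by (auto simp: words_def length_Suc_conv image_iff)

lemma words_Suc_inj: "inj_on (\<lambda>(c,w). c#w) X"
  by (auto simp: inj_on_def)

lemma finite_words: "finite C \<Longrightarrow> finite (words C k)"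
  unfolding words_def by (rule finite_lists_length_eq)

lemma sum_words_prod:
  fixes g :: "'c \<Rightarrow> 'a::comm_semiring_1"
  assumes "finite C"
  shows "(\<Sum>w\<in>words C k. prod_list (map g w)) = (\<Sum>c\<in>C. g c) ^ k"
proof (induction k)
  case 0 then show ?case by (simp add: words_0)
next
  case (Suc k)
  have "(\<Sum>w\<in>words C (Suc k). prod_list (map g w)) =
        (\<Sum>x\<in>C \<times> words C k. prod_list (map g ((\<lambda>(c,w). c#w) x)))"
    unfolding words_Suc by (rule sum.reindex[OF words_Suc_inj, unfolded comp_def])
  also have "\<dots> = (\<Sum>c\<in>C. \<Sum>w\<in>words C k. g c * prod_list (map g w))"
    by (simp add: sum.cartesian_product split_def)
  also have "\<dots> = (\<Sum>c\<in>C. g c) * (\<Sum>w\<in>words C k. prod_list (map g w))"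
    by (rule sum_product[symmetric])
  finally show ?case using Suc by simp
qed

lemma iterate_selfsim:
  fixes M :: "real measure"
  assumes sets: "sets M = sets borel" and fin: "finite C"
  and qpos: "\<And>c. c \<in> C \<Longrightarrow> 0 \<le> q c"
  and rec: "\<And>A. A \<in> sets borel \<Longrightarrow> emeasure M A =
       (\<Sum>c\<in>C. ennreal (q c) * emeasure M ((\<lambda>x. rh c * x + tr c) -` A))"
  shows "A \<in> sets borel \<Longrightarrow> emeasure M A = (\<Sum>w\<in>words C k.
      ennreal (prod_list (map q w)) * emeasure M ((\<lambda>x. Rho rh w * x + Off rh tr w) -` A))"
proof (induction k arbitrary: A)
  case 0 then show ?case by (simp add: words_0)
next
  case (Suc k)
  have "emeasure M A = (\<Sum>c\<in>C. ennreal (q c) * emeasure M ((\<lambda>x. rh c * x + tr c) -` A))"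
    using rec Suc.prems by blast
  also have "\<dots> = (\<Sum>c\<in>C. ennreal (q c) * (\<Sum>w\<in>words C k.
      ennreal (prod_list (map q w)) * emeasure M ((\<lambda>x. Rho rh w * x + Off rh tr w) -` ((\<lambda>x. rh c * x + tr c) -` A))))"
  proof (rule sum.cong[OF refl])
    fix c assume "c \<in> C"
    have "(\<lambda>x. rh c * x + tr c) -` A \<in> sets borel"
    proof -
      have "(\<lambda>x. rh c * x + tr c) \<in> borel_measurable borel" by measurable
      from measurable_sets[OF this Suc.prems] show ?thesis by simp
    qed
    then show "ennreal (q c) * emeasure M ((\<lambda>x. rh c * x + tr c) -` A) = ennreal (q c) * (\<Sum>w\<in>words C k.
      ennreal (prod_list (map q w)) * emeasure M ((\<lambda>x. Rho rh w * x + Off rh tr w) -` ((\<lambda>x. rh c * x + tr c) -` A)))"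
      using Suc.IH by simp
  qed
  also have "\<dots> = (\<Sum>c\<in>C. \<Sum>w\<in>words C k. ennreal (prod_list (map q (c#w))) *
       emeasure M ((\<lambda>x. Rho rh (c#w) * x + Off rh tr (c#w)) -` A))"
  proof (rule sum.cong[OF refl], subst sum_distrib_left, rule sum.cong[OF refl])
    fix c w assume c: "c \<in> C" and w: "w \<in> words C k"
    have "prod_list (map q w) \<ge> 0" using w by (auto simp: words_def intro!: prod_list_nonneg qpos)
    then have e1: "ennreal (prod_list (map q (c#w))) = ennreal (q c) * ennreal (prod_list (map q w))"
      using qpos[OF c] by (simp add: ennreal_mult)
    have e2: "(\<lambda>x. Rho rh w * x + Off rh tr w) -` ((\<lambda>x. rh c * x + tr c) -` A) =
              (\<lambda>x. Rho rh (c#w) * x + Off rh tr (c#w)) -` A"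
      by (auto simp: algebra_simps)
    show "ennreal (q c) * (ennreal (prod_list (map q w)) * emeasure M ((\<lambda>x. Rho rh w * x + Off rh tr w) -` ((\<lambda>x. rh c * x + tr c) -` A))) =
         ennreal (prod_list (map q (c # w))) * emeasure M ((\<lambda>x. Rho rh (c # w) * x + Off rh tr (c # w)) -` A)"
      unfolding e1 e2 by (simp add: mult.assoc)
  qed
  also have "\<dots> = (\<Sum>x\<in>C \<times> words C k. (\<lambda>w. ennreal (prod_list (map q w)) *
       emeasure M ((\<lambda>x. Rho rh w * x + Off rh tr w) -` A)) ((\<lambda>(c,w). c#w) x))"
    by (simp add: sum.cartesian_product split_def)
  also have "\<dots> = (\<Sum>w\<in>words C (Suc k). ennreal (prod_list (map q w)) *
       emeasure M ((\<lambda>x. Rho rh w * x + Off rh tr w) -` A))"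
    unfolding words_Suc by (rule sum.reindex[OF words_Suc_inj, unfolded comp_def, symmetric])
  finally show ?case .
qed


lemma words_set: "w \<in> words C k \<Longrightarrow> set w \<subseteq> C" and words_len: "w \<in> words C k \<Longrightarrow> length w = k"
  by (auto simp: words_def)

lemma Rho_bounds:
  assumes "set w \<subseteq> C" "\<And>c. c \<in> C \<Longrightarrow> 0 < rh c \<and> rh c \<le> r"
  shows "0 < Rho rh w \<and> Rho rh w \<le> r ^ length w"
  using assms(1)
proof (induction w)
  case Nil then show ?case by simp
next
  case (Cons c w)
  then have c: "0 < rh c" "rh c \<le> r" using assms(2) by auto
  from Cons have ih: "0 < Rho rh w" "Rho rh w \<le> r ^ length w" by auto
  show ?case using c ih by (auto intro: mult_mono)
qed

lemma prod_list_pos: "(\<And>c. c \<in> set w \<Longrightarrow> 0 < (q c::real)) \<Longrightarrow> 0 < prod_list (map q w)"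
  by (induction w) auto

lemma Rho_pos: "(\<And>c. c \<in> set w \<Longrightarrow> 0 < rh c) \<Longrightarrow> 0 < Rho rh w"
  by (induction w) auto

lemma prod_list_powr:
  assumes "\<And>c. c \<in> set w \<Longrightarrow> 0 < q c" "\<And>c. c \<in> set w \<Longrightarrow> 0 < rh c"
  shows "prod_list (map q w) powr a * Rho rh w powr b = prod_list (map (\<lambda>c. q c powr a * rh c powr b) w)"
  using assms
proof (induction w)
  case Nil then show ?case by simp
next
  case (Cons c w)
  have p1: "0 < prod_list (map q w)" using Cons.prems by (intro prod_list_pos) auto
  have p2: "0 < Rho rh w" using Cons.prems by (intro Rho_pos) auto
  have "prod_list (map q (c#w)) powr a * Rho rh (c#w) powr b =
        (q c powr a * rh c powr b) * (prod_list (map q w) powr a * Rho rh w powr b)"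
    using Cons.prems p1 p2 by (simp add: powr_mult)
  then show ?case using Cons by simp
qed


lemma abstract_drop:
  fixes M :: "real measure" and C :: "'c set" and q rh tr :: "'c \<Rightarrow> real"
  assumes sets: "sets M = sets borel" and prob: "emeasure M UNIV = 1"
  and R: "R > 0" and MI: "emeasure M {-R..R} = 1"
  and fin: "finite C" and q: "\<And>c. c\<in>C \<Longrightarrow> q c > 0" and qs: "(\<Sum>c\<in>C. q c) = 1"
  and rh: "\<And>c. c\<in>C \<Longrightarrow> 0 < rh c \<and> rh c < 1"
  and rec: "\<And>A. A \<in> sets borel \<Longrightarrow> emeasure M A =
       (\<Sum>c\<in>C. ennreal (q c) * emeasure M ((\<lambda>x. rh c * x + tr c) -` A))"
  and s: "0 < s" "s \<le> 1" and th: "0 < \<theta>"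
  and phi: "(\<Sum>c\<in>C. q c powr (1-\<theta>) * rh c powr (s*\<theta>)) < 1"
  shows "\<exists>A\<in>sets borel. emeasure M A = 1 \<and> hausdorff_measure s A = 0 \<and> emeasure lborel A = 0"
proof -
  have spM: "space M = UNIV" using sets_eq_imp_space_eq[OF sets] by simp
  have Cne: "C \<noteq> {}" using qs by auto
  define rmax where "rmax = Max (rh ` C)"
  have rmax_ge: "\<And>c. c \<in> C \<Longrightarrow> rh c \<le> rmax" unfolding rmax_def using fin by auto
  have rmax_in: "rmax \<in> rh ` C" unfolding rmax_def using fin Cne by (intro Max_in) auto
  then have rmax: "0 < rmax" "rmax < 1" using rh by auto
  have rhb: "\<And>c. c \<in> C \<Longrightarrow> 0 < rh c \<and> rh c \<le> rmax" using rh rmax_ge by auto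
  define \<phi> where "\<phi> = (\<Sum>c\<in>C. q c powr (1-\<theta>) * rh c powr (s*\<theta>))"
  have \<phi>pos: "0 < \<phi>" unfolding \<phi>_def
  proof (intro sum_pos fin Cne)
    fix c assume c: "c \<in> C"
    then have "q c > 0" "rh c > 0" using q rh by auto
    then show "0 < q c powr (1-\<theta>) * rh c powr (s*\<theta>)" by simp
  qed
  have \<phi>1: "\<phi> < 1" using phi \<phi>_def by simp
  define \<psi> where "\<psi> = sqrt \<phi>"
  have \<psi>: "0 < \<psi>" "\<psi> < 1" using \<phi>pos \<phi>1 by (auto simp: \<psi>_def)
  have \<phi>\<psi>: "\<phi> = \<psi> * \<psi>" using \<phi>pos by (simp add: \<psi>_def)
  define \<gamma> where "\<gamma> = \<phi> powr (1/(2*\<theta>))"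
  have \<gamma>: "0 < \<gamma>" "\<gamma> < 1" using \<phi>pos \<phi>1 th powr_less_mono2[of "1/(2*\<theta>)" \<phi> 1] by (auto simp: \<gamma>_def)
  have g1: "\<gamma> powr \<theta> = \<psi>"
  proof -
    have "\<gamma> powr \<theta> = \<phi> powr (1/(2*\<theta>) * \<theta>)" unfolding \<gamma>_def by (rule powr_powr)
    also have "1/(2*\<theta>) * \<theta> = 1/2" using th by simp
    finally show ?thesis using \<phi>pos by (simp add: powr_half_sqrt \<psi>_def)
  qed
  have \<gamma>\<psi>: "\<And>k. (\<gamma> ^ k) powr \<theta> = \<psi> ^ k"
  proof -
    fix k :: nat
    have "(\<gamma> ^ k) powr \<theta> = (\<gamma> powr real k) powr \<theta>" using \<gamma> by (simp only: powr_realpow)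
    also have "\<dots> = \<gamma> powr (real k * \<theta>)" by (rule powr_powr)
    also have "\<dots> = (\<gamma> powr \<theta>) ^ k" using \<gamma> by (simp only: powr_power)
    finally show "(\<gamma> ^ k) powr \<theta> = \<psi> ^ k" using g1 by simp
  qed
  define Q where "Q w = prod_list (map q w)" for w
  have Qpos: "\<And>w k. w \<in> words C k \<Longrightarrow> 0 < Q w"
    unfolding Q_def by (intro prod_list_pos) (auto simp: words_def q)
  have Rb: "\<And>w k. w \<in> words C k \<Longrightarrow> 0 < Rho rh w \<and> Rho rh w \<le> rmax ^ k"
  proof -
    fix w k assume "w \<in> words C k"
    then have "set w \<subseteq> C" "length w = k" by (auto simp: words_def)
    then show "0 < Rho rh w \<and> Rho rh w \<le> rmax ^ k" using Rho_bounds[of w C rh rmax, OF _ rhb] by auto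
  qed
  have R1: "\<And>w k. w \<in> words C k \<Longrightarrow> Rho rh w \<le> 1"
  proof -
    fix w k assume "w \<in> words C k"
    then have "Rho rh w \<le> rmax ^ k" using Rb by blast
    also have "\<dots> \<le> 1" using rmax by (simp add: power_le_one)
    finally show "Rho rh w \<le> 1" .
  qed
  have sumQ: "\<And>k. (\<Sum>w\<in>words C k. Q w) = 1"
    unfolding Q_def using sum_words_prod[OF fin, of q] qs by simp
  have sumPhi: "\<And>k. (\<Sum>w\<in>words C k. Q w powr (1-\<theta>) * Rho rh w powr (s*\<theta>)) = \<phi> ^ k"
  proof -
    fix k
    have "(\<Sum>w\<in>words C k. Q w powr (1-\<theta>) * Rho rh w powr (s*\<theta>)) =
          (\<Sum>w\<in>words C k. prod_list (map (\<lambda>c. q c powr (1-\<theta>) * rh c powr (s*\<theta>)) w))"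
      unfolding Q_def
      by (rule sum.cong[OF refl], rule prod_list_powr) (auto simp: words_def q rh)
    also have "\<dots> = \<phi> ^ k" unfolding \<phi>_def by (rule sum_words_prod[OF fin])
    finally show "(\<Sum>w\<in>words C k. Q w powr (1-\<theta>) * Rho rh w powr (s*\<theta>)) = \<phi> ^ k" .
  qed
  define G where "G k = {w\<in>words C k. Rho rh w powr s \<le> \<gamma>^k * Q w}" for k
  define J where "J w = {Off rh tr w - Rho rh w * R .. Off rh tr w + Rho rh w * R}" for w
  define Ak where "Ak k = (\<Union>w\<in>G k. J w)" for k
  have Gsub: "\<And>k. G k \<subseteq> words C k" unfolding G_def by auto
  have finG: "\<And>k. finite (G k)" using finite_subset[OF Gsub finite_words[OF fin]] .
  have J_borel: "\<And>w. J w \<in> sets borel" unfolding J_def by simp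
  have Ak_borel: "\<And>k. Ak k \<in> sets borel" unfolding Ak_def using finG J_borel by (intro sets.finite_UN) auto
  have good: "\<And>k. (\<Sum>w\<in>G k. Rho rh w powr s) \<le> \<gamma>^k"
  proof -
    fix k
    have "(\<Sum>w\<in>G k. Rho rh w powr s) \<le> (\<Sum>w\<in>G k. \<gamma>^k * Q w)"
      by (rule sum_mono) (auto simp: G_def)
    also have "\<dots> \<le> (\<Sum>w\<in>words C k. \<gamma>^k * Q w)"
      using Gsub finite_words[OF fin] Qpos \<gamma> by (intro sum_mono2) (auto intro: less_imp_le)
    also have "\<dots> = \<gamma>^k" using sumQ by (simp add: sum_distrib_left[symmetric])
    finally show "(\<Sum>w\<in>G k. Rho rh w powr s) \<le> \<gamma>^k" .
  qed
  have bad: "\<And>k. (\<Sum>w\<in>words C k - G k. Q w) \<le> \<psi>^k"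
  proof -
    fix k
    have "(\<Sum>w\<in>words C k - G k. Q w) \<le> (\<Sum>w\<in>words C k - G k. Q w powr (1-\<theta>) * Rho rh w powr (s*\<theta>) / \<psi>^k)"
    proof (rule sum_mono)
      fix w assume w: "w \<in> words C k - G k"
      have Qp: "0 < Q w" using w Qpos by auto
      have Rp: "0 < Rho rh w" using w Rb by auto
      have lt: "Q w < Rho rh w powr s / \<gamma>^k" using w \<gamma> by (auto simp: G_def field_simps)
      have "Q w = Q w powr (1-\<theta>) * Q w powr \<theta>" using Qp by (simp add: powr_add[symmetric])
      also have "\<dots> \<le> Q w powr (1-\<theta>) * (Rho rh w powr s / \<gamma>^k) powr \<theta>"
        using Qp lt th by (intro mult_left_mono powr_mono2) auto
      also have "(Rho rh w powr s / \<gamma>^k) powr \<theta> = Rho rh w powr (s*\<theta>) / \<psi>^k"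
        using Rp \<gamma> by (simp add: powr_divide powr_powr \<gamma>\<psi>)
      finally show "Q w \<le> Q w powr (1-\<theta>) * Rho rh w powr (s*\<theta>) / \<psi>^k" by simp
    qed
    also have "\<dots> \<le> (\<Sum>w\<in>words C k. Q w powr (1-\<theta>) * Rho rh w powr (s*\<theta>) / \<psi>^k)"
      using finite_words[OF fin] \<psi> by (intro sum_mono2) auto
    also have "\<dots> = \<phi>^k / \<psi>^k" using sumPhi by (simp add: sum_divide_distrib[symmetric])
    also have "\<dots> = \<psi>^k" using \<psi> by (simp add: \<phi>\<psi> power_mult_distrib)
    finally show "(\<Sum>w\<in>words C k - G k. Q w) \<le> \<psi>^k" .
  qed
  have MnotI: "emeasure M (UNIV - {-R..R}) = 0"
  proof -
    have "emeasure M (UNIV - {-R..R}) = emeasure M UNIV - emeasure M {-R..R}"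
      using MI by (intro emeasure_Diff) (auto simp: sets spM)
    then show ?thesis using prob MI by simp
  qed
  have Mle1: "\<And>X. emeasure M X \<le> 1"
  proof -
    fix X
    have "emeasure M X \<le> emeasure M (space M)"
      by (cases "X \<in> sets M") (auto intro!: emeasure_mono simp: emeasure_notin_sets spM sets)
    then show "emeasure M X \<le> 1" using prob spM by simp
  qed
  have compl: "\<And>k. emeasure M (UNIV - Ak k) \<le> ennreal (\<psi>^k)"
  proof -
    fix k
    let ?S = "\<lambda>w x. Rho rh w * x + Off rh tr w"
    have UA: "UNIV - Ak k \<in> sets borel" using Ak_borel by auto
    have "emeasure M (UNIV - Ak k) = (\<Sum>w\<in>words C k. ennreal (Q w) * emeasure M (?S w -` (UNIV - Ak k)))"
      unfolding Q_def
      by (rule iterate_selfsim[OF sets fin _ rec UA]) (simp add: less_imp_le q)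
    also have "\<dots> = (\<Sum>w\<in>words C k - G k. ennreal (Q w) * emeasure M (?S w -` (UNIV - Ak k))) +
                    (\<Sum>w\<in>G k. ennreal (Q w) * emeasure M (?S w -` (UNIV - Ak k)))"
      by (rule sum.subset_diff[OF Gsub finite_words[OF fin]])
    also have "(\<Sum>w\<in>G k. ennreal (Q w) * emeasure M (?S w -` (UNIV - Ak k))) = 0"
    proof (rule sum.neutral, rule ballI)
      fix w assume w: "w \<in> G k"
      have Rp: "0 < Rho rh w" using w Gsub Rb by blast
      have sub: "?S w -` (UNIV - Ak k) \<subseteq> UNIV - {-R..R}"
      proof
        fix x assume x: "x \<in> ?S w -` (UNIV - Ak k)"
        show "x \<in> UNIV - {-R..R}"
        proof (rule ccontr)
          assume "\<not> ?thesis"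
          then have "-R \<le> x" "x \<le> R" by auto
          then have "- (Rho rh w * R) \<le> Rho rh w * x" "Rho rh w * x \<le> Rho rh w * R"
            using Rp mult_left_mono[of "-R" x "Rho rh w"] mult_left_mono[of x R "Rho rh w"] by auto
          then have "?S w x \<in> J w" unfolding J_def by auto
          then have "?S w x \<in> Ak k" unfolding Ak_def using w by blast
          then show False using x by auto
        qed
      qed
      have "emeasure M (?S w -` (UNIV - Ak k)) \<le> emeasure M (UNIV - {-R..R})"
        by (rule emeasure_mono[OF sub]) (auto simp: sets)
      then show "ennreal (Q w) * emeasure M (?S w -` (UNIV - Ak k)) = 0" using MnotI by simp
    qed
    also have "(\<Sum>w\<in>words C k - G k. ennreal (Q w) * emeasure M (?S w -` (UNIV - Ak k))) \<le>
               (\<Sum>w\<in>words C k - G k. ennreal (Q w))"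
    proof (rule sum_mono)
      fix w
      show "ennreal (Q w) * emeasure M (?S w -` (UNIV - Ak k)) \<le> ennreal (Q w)"
        using mult_left_mono[OF Mle1, of "ennreal (Q w)"] by simp
    qed
    also have "\<dots> = ennreal (\<Sum>w\<in>words C k - G k. Q w)"
      using Qpos by (intro sum_ennreal) (auto intro: less_imp_le)
    also have "\<dots> \<le> ennreal (\<psi>^k)" using bad by (rule ennreal_leI)
    finally show "emeasure M (UNIV - Ak k) \<le> ennreal (\<psi>^k)" by simp
  qed
  define B where "B j = (\<Union>k. Ak (k + j))" for j
  define A where "A = (\<Inter>j. B j)"
  have B_borel: "\<And>j. B j \<in> sets borel" unfolding B_def using Ak_borel by auto
  have A_borel: "A \<in> sets borel" unfolding A_def using B_borel by auto
  have lim0: "\<And>c j. (\<lambda>k. ennreal (c * \<psi>^(k+j))) \<longlonglongrightarrow> 0"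
  proof -
    fix c :: real and j :: nat
    have "(\<lambda>k. c * \<psi>^j * \<psi>^k) \<longlonglongrightarrow> c * \<psi>^j * 0"
      using \<psi> by (intro tendsto_mult tendsto_const LIMSEQ_power_zero) auto
    then have "(\<lambda>k. ennreal (c * \<psi>^(k+j))) \<longlonglongrightarrow> ennreal 0"
      by (intro tendsto_ennrealI) (simp add: power_add mult_ac)
    then show "(\<lambda>k. ennreal (c * \<psi>^(k+j))) \<longlonglongrightarrow> 0" by simp
  qed
  have MB: "\<And>j. emeasure M (UNIV - B j) = 0"
  proof -
    fix j
    have "emeasure M (UNIV - B j) \<le> 0"
    proof (rule LIMSEQ_le_const[OF lim0[of 1 j]], intro exI allI impI)
      fix k :: nat
      have "emeasure M (UNIV - B j) \<le> emeasure M (UNIV - Ak (k+j))"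
        by (rule emeasure_mono) (auto simp: B_def sets Ak_borel)
      also have "\<dots> \<le> ennreal (1 * \<psi>^(k+j))" using compl by simp
      finally show "emeasure M (UNIV - B j) \<le> ennreal (1 * \<psi>^(k+j))" .
    qed
    then show "emeasure M (UNIV - B j) = 0" by simp
  qed
  have MA0: "emeasure M (UNIV - A) = 0"
  proof -
    have "UNIV - A = (\<Union>j. UNIV - B j)" unfolding A_def by auto
    also have "emeasure M \<dots> = 0" using MB B_borel by (intro emeasure_UN_eq_0) (auto simp: sets)
    finally show ?thesis .
  qed
  have MA: "emeasure M A = 1"
  proof -
    interpret prob_space M using prob spM by (intro prob_spaceI) simp
    have "AE x in M. x \<in> A"
      using MA0 A_borel by (subst AE_iff_measurable[of "UNIV - A"]) (auto simp: sets spM)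
    then show ?thesis using A_borel by (intro emeasure_eq_1_AE) (auto simp: sets)
  qed
  have lebAk: "\<And>k. emeasure lborel (Ak k) \<le> ennreal (2*R*\<gamma>^k)"
  proof -
    fix k
    have "emeasure lborel (Ak k) \<le> (\<Sum>w\<in>G k. emeasure lborel (J w))"
      unfolding Ak_def using finG J_borel by (intro emeasure_subadditive_finite) auto
    also have "\<dots> = (\<Sum>w\<in>G k. ennreal (2*R*Rho rh w))"
    proof (rule sum.cong[OF refl])
      fix w assume "w \<in> G k"
      then have "0 < Rho rh w" using Gsub Rb by blast
      then have "Off rh tr w - Rho rh w * R \<le> Off rh tr w + Rho rh w * R" using R by simp
      then show "emeasure lborel (J w) = ennreal (2*R*Rho rh w)" unfolding J_def
        by (subst emeasure_lborel_Icc) (auto simp: algebra_simps)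
    qed
    also have "\<dots> = ennreal (\<Sum>w\<in>G k. 2*R*Rho rh w)"
    proof (rule sum_ennreal)
      fix w assume "w \<in> G k"
      then have "0 < Rho rh w" using Gsub Rb by blast
      then show "0 \<le> 2*R*Rho rh w" using R by simp
    qed
    also have "\<dots> \<le> ennreal (2*R*\<gamma>^k)"
    proof (rule ennreal_leI)
      have "(\<Sum>w\<in>G k. 2*R*Rho rh w) \<le> (\<Sum>w\<in>G k. 2*R*Rho rh w powr s)"
      proof (rule sum_mono)
        fix w assume "w \<in> G k"
        then have "0 < Rho rh w" "Rho rh w \<le> 1" using Gsub Rb R1 by blast+
        then have "Rho rh w powr 1 \<le> Rho rh w powr s" using s by (intro powr_mono') auto
        then show "2*R*Rho rh w \<le> 2*R*Rho rh w powr s" using R \<open>0 < Rho rh w\<close> by simp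
      qed
      also have "\<dots> = 2*R*(\<Sum>w\<in>G k. Rho rh w powr s)" by (simp add: sum_distrib_left)
      also have "\<dots> \<le> 2*R*\<gamma>^k" using good[of k] R by simp
      finally show "(\<Sum>w\<in>G k. 2*R*Rho rh w) \<le> 2*R*\<gamma>^k" .
    qed
    finally show "emeasure lborel (Ak k) \<le> ennreal (2*R*\<gamma>^k)" .
  qed
  have geo: "\<And>c j. c \<ge> 0 \<Longrightarrow> (\<Sum>k. ennreal (c*\<gamma>^(k+j))) = ennreal (c*\<gamma>^j/(1-\<gamma>))"
  proof -
    fix c :: real and j :: nat assume c: "c \<ge> 0"
    have "(\<lambda>k. c*\<gamma>^j * \<gamma>^k) sums (c*\<gamma>^j * (1/(1-\<gamma>)))" using \<gamma> by (intro sums_mult geometric_sums) auto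
    moreover have "(\<lambda>k. c*\<gamma>^(k+j)) = (\<lambda>k. c*\<gamma>^j * \<gamma>^k)" by (rule ext) (simp add: power_add)
    ultimately have sm: "(\<lambda>k. c*\<gamma>^(k+j)) sums (c*\<gamma>^j/(1-\<gamma>))" by simp
    have "(\<Sum>k. ennreal (c*\<gamma>^(k+j))) = ennreal (\<Sum>k. c*\<gamma>^(k+j))"
      using c \<gamma> by (intro suminf_ennreal2 sums_summable[OF sm]) simp
    also have "(\<Sum>k. c*\<gamma>^(k+j)) = c*\<gamma>^j/(1-\<gamma>)" by (rule sums_unique[OF sm, symmetric])
    finally show "(\<Sum>k. ennreal (c*\<gamma>^(k+j))) = ennreal (c*\<gamma>^j/(1-\<gamma>))" .
  qed
  have lim1: "\<And>c. (\<lambda>j. ennreal (c*\<gamma>^j/(1-\<gamma>))) \<longlonglongrightarrow> 0"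
  proof -
    fix c :: real
    have "(\<lambda>j. c*\<gamma>^j/(1-\<gamma>)) \<longlonglongrightarrow> c*0/(1-\<gamma>)"
      using \<gamma> by (intro tendsto_divide tendsto_mult tendsto_const LIMSEQ_power_zero) auto
    then have "(\<lambda>j. ennreal (c*\<gamma>^j/(1-\<gamma>))) \<longlonglongrightarrow> ennreal 0"
      by (intro tendsto_ennrealI) simp
    then show "(\<lambda>j. ennreal (c*\<gamma>^j/(1-\<gamma>))) \<longlonglongrightarrow> 0" by simp
  qed
  have lebA: "emeasure lborel A = 0"
  proof -
    have "emeasure lborel A \<le> 0"
    proof (rule LIMSEQ_le_const[OF lim1[of "2*R"]], intro exI allI impI)
      fix j :: nat
      have "emeasure lborel A \<le> emeasure lborel (B j)" unfolding A_def
        by (rule emeasure_mono) (auto simp: B_borel)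
      also have "\<dots> \<le> (\<Sum>k. emeasure lborel (Ak (k+j)))" unfolding B_def
        by (rule emeasure_subadditive_countably) (auto simp: Ak_borel)
      also have "\<dots> \<le> (\<Sum>k. ennreal (2*R*\<gamma>^(k+j)))" by (intro suminf_le lebAk summableI)
      also have "\<dots> = ennreal (2*R*\<gamma>^j/(1-\<gamma>))" using R by (intro geo) auto
      finally show "emeasure lborel A \<le> ennreal (2*R*\<gamma>^j/(1-\<gamma>))" .
    qed
    then show ?thesis by simp
  qed
  have hausA: "hausdorff_measure s A = 0"
  proof -
    have pre0: "hausdorff_pre s \<delta> A = 0" if \<delta>: "\<delta> > 0" for \<delta>
    proof -
      have "(\<lambda>j. 2*R*rmax^j) \<longlonglongrightarrow> 2*R*0" using rmax by (intro tendsto_mult tendsto_const LIMSEQ_power_zero) auto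
      then have "eventually (\<lambda>j. 2*R*rmax^j < \<delta>) sequentially" using \<delta> by (intro order_tendstoD(2)) auto
      then obtain N where N: "\<And>j. j \<ge> N \<Longrightarrow> 2*R*rmax^j < \<delta>" by (auto simp: eventually_sequentially)
      have "\<forall>k. \<exists>h. bij_betw h {0..<card (G k)} (G k)" using ex_bij_betw_nat_finite finG by blast
      then obtain hh where hh: "\<And>k. bij_betw (hh k) {0..<card (G k)} (G k)" by metis
      have pre_le: "hausdorff_pre s \<delta> A \<le> ennreal ((2*R) powr s * \<gamma>^j/(1-\<gamma>))" if j: "j \<ge> N" for j
      proof -
        define U where "U m = (case prod_decode m of (k,i) \<Rightarrow> if i < card (G (k+j)) then J (hh (k+j) i) else {})" for m
        have cover: "A \<subseteq> (\<Union>m. U m)"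
        proof
          fix x assume "x \<in> A"
          then have "x \<in> B j" unfolding A_def by auto
          then obtain k w where w: "w \<in> G (k+j)" and x: "x \<in> J w" unfolding B_def Ak_def by auto
          have "w \<in> hh (k+j) ` {0..<card (G (k+j))}" using bij_betw_imp_surj_on[OF hh[of "k+j"]] w by simp
          then obtain i where i: "i < card (G (k+j))" "hh (k+j) i = w" by auto
          then have "U (prod_encode (k,i)) = J w" unfolding U_def by simp
          then show "x \<in> (\<Union>m. U m)" using x by blast
        qed
        have Jw: "diameter (J (hh (k+j) i)) = 2*R*Rho rh (hh (k+j) i) \<and> Rho rh (hh (k+j) i) \<le> rmax^(k+j)
                  \<and> 0 < Rho rh (hh (k+j) i) \<and> hh (k+j) i \<in> G (k+j)"
          if i: "i < card (G (k+j))" for k i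
        proof -
          let ?w = "hh (k+j) i"
          have w: "?w \<in> G (k+j)" using hh[of "k+j"] i by (auto dest: bij_betwE)
          have Rw: "0 < Rho rh ?w" "Rho rh ?w \<le> rmax^(k+j)" using w Gsub Rb by blast+
          have "0 < R * Rho rh ?w" using Rw R by simp
          then have "diameter (J ?w) = 2*R*Rho rh ?w" unfolding J_def by (simp add: algebra_simps)
          then show ?thesis using Rw w by simp
        qed
        have diam: "diameter (U m) \<le> \<delta>" for m
        proof -
          obtain k i where ki: "prod_decode m = (k,i)" by (cases "prod_decode m")
          show ?thesis
          proof (cases "i < card (G (k+j))")
            case True
            let ?w = "hh (k+j) i"
            have "diameter (U m) = 2*R*Rho rh ?w" unfolding U_def ki using True Jw[OF True] by simp
            also have "\<dots> \<le> 2*R*rmax^(k+j)" using Jw[OF True] R by simp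
            also have "\<dots> \<le> 2*R*rmax^j" using rmax R by (intro mult_left_mono power_decreasing) auto
            also have "\<dots> \<le> \<delta>" using N j by (simp add: less_imp_le)
            finally show ?thesis .
          next
            case False then show ?thesis unfolding U_def ki using \<delta> by simp
          qed
        qed
        have sumU: "(\<Sum>m. ennreal (diameter (U m) powr s)) \<le> ennreal ((2*R) powr s * \<gamma>^j/(1-\<gamma>))"
        proof -
          define F where "F p = ennreal (diameter (U (prod_encode p)) powr s)" for p
          have "(\<Sum>m. ennreal (diameter (U m) powr s)) = (\<Sum>m. F (prod_decode m))" unfolding F_def by simp
          also have "\<dots> = (\<Sum>k. \<Sum>i. F (k,i))" by (rule suminf_ennreal_2dimen) simp
          also have "\<dots> \<le> (\<Sum>k. ennreal ((2*R) powr s * \<gamma>^(k+j)))"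
          proof (intro suminf_le summableI)
            fix k
            have "(\<Sum>i. F (k,i)) = (\<Sum>i\<in>{0..<card (G (k+j))}. F (k,i))"
              by (rule suminf_finite) (simp_all add: F_def U_def)
            also have "\<dots> = (\<Sum>i\<in>{0..<card (G (k+j))}. ennreal ((2*R*Rho rh (hh (k+j) i)) powr s))"
            proof (rule sum.cong[OF refl])
              fix i assume "i \<in> {0..<card (G (k+j))}"
              then have i: "i < card (G (k+j))" by simp
              have "U (prod_encode (k,i)) = J (hh (k+j) i)" unfolding U_def using i by simp
              then show "F (k,i) = ennreal ((2*R*Rho rh (hh (k+j) i)) powr s)"
                unfolding F_def using Jw[OF i] by simp
            qed
            also have "\<dots> = (\<Sum>w\<in>G (k+j). ennreal ((2*R*Rho rh w) powr s))"
              by (rule sum.reindex_bij_betw[OF hh[of "k+j"]])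
            also have "\<dots> = ennreal (\<Sum>w\<in>G (k+j). (2*R*Rho rh w) powr s)" by (intro sum_ennreal) auto
            also have "\<dots> \<le> ennreal ((2*R) powr s * \<gamma>^(k+j))"
            proof (rule ennreal_leI)
              have "(\<Sum>w\<in>G (k+j). (2*R*Rho rh w) powr s) = (\<Sum>w\<in>G (k+j). (2*R) powr s * Rho rh w powr s)"
              proof (rule sum.cong[OF refl])
                fix w assume "w \<in> G (k+j)"
                then have "0 < Rho rh w" using Gsub Rb by blast
                then show "(2*R*Rho rh w) powr s = (2*R) powr s * Rho rh w powr s" using R by (simp add: powr_mult)
              qed
              also have "\<dots> = (2*R) powr s * (\<Sum>w\<in>G (k+j). Rho rh w powr s)" by (simp add: sum_distrib_left)
              also have "\<dots> \<le> (2*R) powr s * \<gamma>^(k+j)" using good[of "k+j"] by (intro mult_left_mono) auto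
              finally show "(\<Sum>w\<in>G (k+j). (2*R*Rho rh w) powr s) \<le> (2*R) powr s * \<gamma>^(k+j)" .
            qed
            finally show "(\<Sum>i. F (k,i)) \<le> ennreal ((2*R) powr s * \<gamma>^(k+j))" .
          qed
          also have "\<dots> = ennreal ((2*R) powr s * \<gamma>^j/(1-\<gamma>))" by (intro geo) auto
          finally show ?thesis .
        qed
        have "hausdorff_pre s \<delta> A \<le> (\<Sum>m. ennreal (diameter (U m) powr s))"
          unfolding hausdorff_pre_def using cover diam by (intro INF_lower) auto
        then show ?thesis using sumU by (rule order_trans)
      qed
      have "hausdorff_pre s \<delta> A \<le> 0"
        by (rule LIMSEQ_le_const[OF lim1[of "(2*R) powr s"]]) (use pre_le in auto)
      then show ?thesis by simp
    qed
    have "(SUP \<delta>\<in>{0<..}. hausdorff_pre s \<delta> A) = (SUP \<delta>\<in>({0<..}::real set). (0::ennreal))"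
      by (rule SUP_cong) (auto simp: pre0)
    then show ?thesis unfolding hausdorff_measure_def by simp
  qed
  show ?thesis using A_borel MA hausA lebA by blast
qed


definition bt :: "real \<Rightarrow> real \<Rightarrow> bool \<Rightarrow> real" where "bt b1 b2 a = (if a then b1 else b2)"
definition sg :: "bool \<Rightarrow> real" where "sg a = (if a then 1 else -1)"
definition pa :: "real \<Rightarrow> bool \<Rightarrow> real" where "pa p a = (if a then p else 1 - p)"

definition Tm :: "real \<Rightarrow> real \<Rightarrow> bool \<Rightarrow> real \<Rightarrow> real" where
  "Tm b1 b2 a x = bt b1 b2 a * x + bt b1 b2 a * sg a"

lemma Tm_True: "Tm b1 b2 True = T1 b1" by (auto simp: Tm_def T1_def bt_def sg_def fun_eq_iff)
lemma Tm_False: "Tm b1 b2 False = T2 b2" by (auto simp: Tm_def T2_def bt_def sg_def fun_eq_iff)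

lemma Tm_meas[measurable]: "Tm b1 b2 a \<in> borel_measurable borel"
  unfolding Tm_def by measurable

lemma T1_meas[measurable]: "T1 b1 \<in> borel_measurable borel" unfolding T1_def by measurable
lemma T2_meas[measurable]: "T2 b2 \<in> borel_measurable borel" unfolding T2_def by measurable

lemma selfsim_eq:
  assumes "is_selfsim b1 b2 p M" "A \<in> sets borel"
  shows "emeasure M A = ennreal p * emeasure M (T1 b1 -` A) + ennreal (1 - p) * emeasure M (T2 b2 -` A)"
proof -
  have sets: "sets M = sets borel" using assms(1) by (simp add: is_selfsim_def)
  have sp: "space M = UNIV" using sets_eq_imp_space_eq[OF sets] by simp
  have m1: "T1 b1 \<in> measurable M borel" using measurable_cong_sets[OF sets refl] T1_meas by blast
  have m2: "T2 b2 \<in> measurable M borel" using measurable_cong_sets[OF sets refl] T2_meas by blast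
  show ?thesis using assms m1 m2 unfolding is_selfsim_def by (simp add: emeasure_distr sp)
qed

lemma selfsim_rec:
  assumes "is_selfsim b1 b2 p M" "A \<in> sets borel"
  shows "emeasure M A = (\<Sum>a\<in>UNIV. ennreal (pa p a) * emeasure M ((\<lambda>x. bt b1 b2 a * x + bt b1 b2 a * sg a) -` A))"
  using selfsim_eq[OF assms] Tm_True[of b1 b2] Tm_False[of b1 b2]
  by (simp add: UNIV_bool pa_def Tm_def[abs_def] add.commute)


definition tm :: "real \<Rightarrow> real \<Rightarrow> bool stream \<Rightarrow> nat \<Rightarrow> real" where
  "tm b1 b2 \<omega> k = sg (\<omega> !! k) * (\<Prod>j\<le>k. bt b1 b2 (\<omega> !! j))"

definition piS :: "real \<Rightarrow> real \<Rightarrow> bool stream \<Rightarrow> real" where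
  "piS b1 b2 \<omega> = (\<Sum>k. tm b1 b2 \<omega> k)"

lemma tm_bound:
  assumes "0 < b1" "b1 < 1" "0 < b2" "b2 < 1"
  shows "\<bar>tm b1 b2 \<omega> k\<bar> \<le> max b1 b2 ^ Suc k"
proof -
  have "(\<Prod>j\<le>k. bt b1 b2 (\<omega> !! j)) \<le> (\<Prod>j\<le>k. max b1 b2)"
    using assms by (intro prod_mono) (auto simp: bt_def)
  moreover have "0 \<le> (\<Prod>j\<le>k. bt b1 b2 (\<omega> !! j))"
    using assms by (intro prod_nonneg) (auto simp: bt_def)
  ultimately show ?thesis by (auto simp: tm_def sg_def abs_mult)
qed

lemma summable_tm:
  assumes "0 < b1" "b1 < 1" "0 < b2" "b2 < 1"
  shows "summable (\<lambda>k. \<bar>tm b1 b2 \<omega> k\<bar>)" "summable (tm b1 b2 \<omega>)"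
proof -
  have g: "summable (\<lambda>k. max b1 b2 ^ Suc k)" using assms
    by (simp add: summable_mult summable_geometric)
  show "summable (\<lambda>k. \<bar>tm b1 b2 \<omega> k\<bar>)"
    by (rule summable_comparison_test[OF _ g]) (use tm_bound[OF assms] in auto)
  then show "summable (tm b1 b2 \<omega>)" by (rule summable_rabs_cancel)
qed

lemma piS_bound:
  assumes "0 < b1" "b1 < 1" "0 < b2" "b2 < 1"
  shows "\<bar>piS b1 b2 \<omega>\<bar> \<le> max b1 b2 / (1 - max b1 b2)"
proof -
  let ?r = "max b1 b2"
  have r: "0 < ?r" "?r < 1" using assms by auto
  have "norm ?r < 1" using r by simp
  from sums_mult[OF geometric_sums[OF this], of ?r]
  have gs: "(\<lambda>k. ?r ^ Suc k) sums (?r / (1 - ?r))" by simp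
  have "\<bar>piS b1 b2 \<omega>\<bar> \<le> (\<Sum>k. \<bar>tm b1 b2 \<omega> k\<bar>)"
    unfolding piS_def by (rule summable_rabs[OF summable_tm(1)[OF assms]])
  also have "\<dots> \<le> (\<Sum>k. ?r ^ Suc k)"
    by (rule suminf_le) (use tm_bound[OF assms] summable_tm(1)[OF assms] gs in \<open>auto simp: sums_iff\<close>)
  also have "\<dots> = ?r / (1 - ?r)" using sums_unique[OF gs] by simp
  finally show ?thesis .
qed

lemma piS_Stream:
  assumes "0 < b1" "b1 < 1" "0 < b2" "b2 < 1"
  shows "piS b1 b2 (a ## \<omega>) = Tm b1 b2 a (piS b1 b2 \<omega>)"
proof -
  have s1: "tm b1 b2 (a ## \<omega>) (Suc k) = bt b1 b2 a * tm b1 b2 \<omega> k" for k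
    unfolding tm_def by (simp add: prod.atMost_Suc_shift del: prod.atMost_Suc)
  have "piS b1 b2 (a ## \<omega>) = tm b1 b2 (a ## \<omega>) 0 + (\<Sum>k. tm b1 b2 (a ## \<omega>) (Suc k))"
    unfolding piS_def using suminf_split_head[OF summable_tm(2)[OF assms, of "a ## \<omega>"]] by simp
  also have "(\<Sum>k. tm b1 b2 (a ## \<omega>) (Suc k)) = bt b1 b2 a * piS b1 b2 \<omega>"
    unfolding s1 piS_def by (rule suminf_mult[OF summable_tm(2)[OF assms]])
  finally show ?thesis by (simp add: Tm_def tm_def mult.commute)
qed

lemma piS_meas[measurable]: "piS b1 b2 \<in> borel_measurable (stream_space (measure_pmf P))"
  unfolding piS_def tm_def by measurable


definition mu0 :: "real \<Rightarrow> real \<Rightarrow> real \<Rightarrow> real measure" where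
  "mu0 b1 b2 p = distr (stream_space (measure_pmf (bernoulli_pmf p))) borel (piS b1 b2)"

lemma mu0_ind:
  assumes "X \<in> sets borel"
  shows "emeasure (mu0 b1 b2 p) X = (\<integral>\<^sup>+\<omega>. indicator X (piS b1 b2 \<omega>) \<partial>stream_space (measure_pmf (bernoulli_pmf p)))"
proof -
  have "emeasure (mu0 b1 b2 p) X = (\<integral>\<^sup>+x. indicator X x \<partial>mu0 b1 b2 p)"
    using assms by (simp add: mu0_def)
  also have "\<dots> = (\<integral>\<^sup>+\<omega>. indicator X (piS b1 b2 \<omega>) \<partial>stream_space (measure_pmf (bernoulli_pmf p)))"
    unfolding mu0_def using assms by (subst nn_integral_distr) auto
  finally show ?thesis .
qed

lemma mu0_selfsim:
  assumes b: "0 < b1" "b1 < 1" "0 < b2" "b2 < 1" and p: "0 \<le> p" "p \<le> 1"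
  shows "is_selfsim b1 b2 p (mu0 b1 b2 p)"
proof -
  let ?B = "measure_pmf (bernoulli_pmf p)"
  let ?S = "stream_space ?B"
  interpret B: prob_space ?B by (rule prob_space_measure_pmf)
  interpret S: prob_space ?S by (rule prob_space.prob_space_stream_space[OF prob_space_measure_pmf])
  have ps: "prob_space (mu0 b1 b2 p)" unfolding mu0_def by (rule S.prob_space_distr) simp
  have sp: "space (mu0 b1 b2 p) = UNIV" by (simp add: mu0_def)
  have eq: "emeasure (mu0 b1 b2 p) A = ennreal p * emeasure (distr (mu0 b1 b2 p) borel (T1 b1)) A
                     + ennreal (1 - p) * emeasure (distr (mu0 b1 b2 p) borel (T2 b2)) A"
    if A: "A \<in> sets borel" for A
  proof -
    have "emeasure (mu0 b1 b2 p) A = (\<integral>\<^sup>+\<omega>. indicator A (piS b1 b2 \<omega>) \<partial>?S)" by (rule mu0_ind[OF A])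
    also have "\<dots> = (\<integral>\<^sup>+a. \<integral>\<^sup>+\<omega>. indicator A (piS b1 b2 (a ## \<omega>)) \<partial>?S \<partial>?B)"
      using A by (subst prob_space.nn_integral_stream_space[OF prob_space_measure_pmf]) auto
    also have "\<dots> = (\<integral>\<^sup>+a. \<integral>\<^sup>+\<omega>. indicator (Tm b1 b2 a -` A) (piS b1 b2 \<omega>) \<partial>?S \<partial>?B)"
      by (simp add: piS_Stream[OF b] indicator_def)
    also have "\<dots> = (\<integral>\<^sup>+a. emeasure (mu0 b1 b2 p) (Tm b1 b2 a -` A) \<partial>?B)"
    proof (rule nn_integral_cong)
      fix a
      have "Tm b1 b2 a -` A \<in> sets borel" using measurable_sets[OF Tm_meas A] by simp
      then show "(\<integral>\<^sup>+\<omega>. indicator (Tm b1 b2 a -` A) (piS b1 b2 \<omega>) \<partial>?S) = emeasure (mu0 b1 b2 p) (Tm b1 b2 a -` A)"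
        by (rule mu0_ind[symmetric])
    qed
    also have "\<dots> = emeasure (mu0 b1 b2 p) (Tm b1 b2 True -` A) * ennreal p + emeasure (mu0 b1 b2 p) (Tm b1 b2 False -` A) * ennreal (1 - p)"
      using p by (subst nn_integral_bernoulli_pmf) auto
    also have "\<dots> = ennreal p * emeasure (distr (mu0 b1 b2 p) borel (T1 b1)) A
                     + ennreal (1 - p) * emeasure (distr (mu0 b1 b2 p) borel (T2 b2)) A"
    proof -
      have smu: "sets (mu0 b1 b2 p) = sets borel" by (simp add: mu0_def)
      have m1: "T1 b1 \<in> measurable (mu0 b1 b2 p) borel" using measurable_cong_sets[OF smu refl] T1_meas by blast
      have m2: "T2 b2 \<in> measurable (mu0 b1 b2 p) borel" using measurable_cong_sets[OF smu refl] T2_meas by blast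
      show ?thesis by (simp add: emeasure_distr[OF m1 A] emeasure_distr[OF m2 A] sp Tm_True Tm_False mult.commute)
    qed
    finally show ?thesis .
  qed
  show ?thesis unfolding is_selfsim_def using eq prob_space.emeasure_space_1[OF ps]
    by (simp add: mu0_def)
qed

lemma mu0_support:
  assumes b: "0 < b1" "b1 < 1" "0 < b2" "b2 < 1"
  shows "emeasure (mu0 b1 b2 p) {- (max b1 b2 / (1 - max b1 b2)) .. max b1 b2 / (1 - max b1 b2)} = 1"
proof -
  let ?B = "measure_pmf (bernoulli_pmf p)"
  let ?S = "stream_space ?B"
  interpret B: prob_space ?B by (rule prob_space_measure_pmf)
  interpret S: prob_space ?S by (rule prob_space.prob_space_stream_space[OF prob_space_measure_pmf])
  let ?I = "{- (max b1 b2 / (1 - max b1 b2)) .. max b1 b2 / (1 - max b1 b2)}"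
  have "piS b1 b2 \<omega> \<in> ?I" for \<omega>
  proof -
    have "\<bar>piS b1 b2 \<omega>\<bar> \<le> max b1 b2 / (1 - max b1 b2)" by (rule piS_bound[OF b])
    then show ?thesis by (simp add: abs_le_iff)
  qed
  then have "piS b1 b2 -` ?I \<inter> space ?S = space ?S" by auto
  then show ?thesis unfolding mu0_def by (simp add: emeasure_distr S.emeasure_space_1)
qed


lemma selfsim_basic:
  assumes "is_selfsim b1 b2 p M"
  shows "sets M = sets borel" "space M = UNIV" "prob_space M" "real_distribution M"
proof -
  show s: "sets M = sets borel" using assms by (simp add: is_selfsim_def)
  show sp: "space M = UNIV" using sets_eq_imp_space_eq[OF s] by simp
  show ps: "prob_space M" using assms by (intro prob_spaceI) (simp add: is_selfsim_def)
  show "real_distribution M" unfolding real_distribution_def real_distribution_axioms_def using ps s by simp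
qed

lemma selfsim_bind:
  assumes ss: "is_selfsim b1 b2 p M" and p: "0 \<le> p" "p \<le> 1"
  shows "M = measure_pmf (bernoulli_pmf p) \<bind> (\<lambda>a. distr M borel (Tm b1 b2 a))"
proof -
  note b = selfsim_basic[OF ss]
  have mT: "Tm b1 b2 a \<in> measurable M borel" for a using measurable_cong_sets[OF b(1) refl] Tm_meas by blast
  have N: "(\<lambda>a. distr M borel (Tm b1 b2 a)) \<in> measurable (measure_pmf (bernoulli_pmf p)) (subprob_algebra borel)"
  proof -
    have "distr M borel (Tm b1 b2 a) \<in> space (subprob_algebra borel)" for a
      using prob_space.prob_space_distr[OF b(3) mT] by (auto simp: space_subprob_algebra intro: prob_space_imp_subprob_space)
    then show ?thesis by simp
  qed
  have ne: "space (measure_pmf (bernoulli_pmf p)) \<noteq> {}" by simp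
  show ?thesis
  proof (rule measure_eqI)
    show "sets M = sets (measure_pmf (bernoulli_pmf p) \<bind> (\<lambda>a. distr M borel (Tm b1 b2 a)))"
      using b(1) by (subst sets_bind[OF _ ne]) auto
    fix A assume "A \<in> sets M"
    then have A: "A \<in> sets borel" using b(1) by simp
    have "emeasure (measure_pmf (bernoulli_pmf p) \<bind> (\<lambda>a. distr M borel (Tm b1 b2 a))) A =
          (\<integral>\<^sup>+a. emeasure (distr M borel (Tm b1 b2 a)) A \<partial>measure_pmf (bernoulli_pmf p))"
      by (rule emeasure_bind[OF ne N A])
    also have "\<dots> = emeasure (distr M borel (Tm b1 b2 True)) A * ennreal p + emeasure (distr M borel (Tm b1 b2 False)) A * ennreal (1 - p)"
      using p by (subst nn_integral_bernoulli_pmf) auto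
    also have "\<dots> = emeasure M A" using ss A unfolding is_selfsim_def Tm_True Tm_False by (simp add: mult.commute)
    finally show "emeasure M A = emeasure (measure_pmf (bernoulli_pmf p) \<bind> (\<lambda>a. distr M borel (Tm b1 b2 a))) A" by simp
  qed
qed

lemma selfsim_integral:
  fixes f :: "real \<Rightarrow> real"
  assumes ss: "is_selfsim b1 b2 p M" and p: "0 \<le> p" "p \<le> 1"
  and f[measurable]: "f \<in> borel_measurable borel" and fb: "\<And>x. \<bar>f x\<bar> \<le> K"
  shows "(\<integral>x. f x \<partial>M) = p * (\<integral>x. f (Tm b1 b2 True x) \<partial>M) + (1 - p) * (\<integral>x. f (Tm b1 b2 False x) \<partial>M)"
proof -
  note b = selfsim_basic[OF ss]
  have mT: "Tm b1 b2 a \<in> measurable M borel" for a using measurable_cong_sets[OF b(1) refl] Tm_meas by blast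
  have N: "(\<lambda>a. distr M borel (Tm b1 b2 a)) \<in> measurable (measure_pmf (bernoulli_pmf p)) (subprob_algebra borel)"
  proof -
    have "distr M borel (Tm b1 b2 a) \<in> space (subprob_algebra borel)" for a
      using prob_space.prob_space_distr[OF b(3) mT] by (auto simp: space_subprob_algebra intro: prob_space_imp_subprob_space)
    then show ?thesis by simp
  qed
  have "(\<integral>x. f x \<partial>M) = (\<integral>x. f x \<partial>(measure_pmf (bernoulli_pmf p) \<bind> (\<lambda>a. distr M borel (Tm b1 b2 a))))"
    by (rule arg_cong[where f="\<lambda>N. integral\<^sup>L N f", OF selfsim_bind[OF ss p]])
  also have "\<dots> = (\<integral>a. (\<integral>x. f x \<partial>distr M borel (Tm b1 b2 a)) \<partial>measure_pmf (bernoulli_pmf p))"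
  proof (rule integral_bind[OF f _ N, where B=K and B'=1])
    show "\<bar>f x\<bar> \<le> K" for x by (rule fb)
    show "finite_measure (measure_pmf (bernoulli_pmf p))" by (rule prob_space.axioms(1)[OF prob_space_measure_pmf])
    show "AE x in measure_pmf (bernoulli_pmf p). emeasure (distr M borel (Tm b1 b2 x)) (space (distr M borel (Tm b1 b2 x))) \<le> ennreal 1"
    proof (rule AE_I2)
      fix a
      have "prob_space (distr M borel (Tm b1 b2 a))" by (rule prob_space.prob_space_distr[OF b(3) mT])
      from prob_space.emeasure_space_1[OF this]
      show "emeasure (distr M borel (Tm b1 b2 a)) (space (distr M borel (Tm b1 b2 a))) \<le> ennreal 1" by simp
    qed
  qed
  also have "\<dots> = (\<integral>x. f x \<partial>distr M borel (Tm b1 b2 True)) * p + (\<integral>x. f x \<partial>distr M borel (Tm b1 b2 False)) * (1 - p)"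
    using p by (rule integral_bernoulli_pmf)
  also have "\<dots> = p * (\<integral>x. f (Tm b1 b2 True x) \<partial>M) + (1 - p) * (\<integral>x. f (Tm b1 b2 False x) \<partial>M)"
    by (simp add: integral_distr[OF mT f] mult.commute)
  finally show ?thesis .
qed

lemma cint_ReIm:
  fixes g :: "'a \<Rightarrow> complex"
  assumes "integrable M g"
  shows "integral\<^sup>L M g = Complex (\<integral>x. Re (g x) \<partial>M) (\<integral>x. Im (g x) \<partial>M)"
proof -
  have h: "has_bochner_integral M g (integral\<^sup>L M g)" by (rule has_bochner_integral_integrable[OF assms])
  have "(\<integral>x. Re (g x) \<partial>M) = Re (integral\<^sup>L M g)"
    by (rule has_bochner_integral_integral_eq[OF has_bochner_integral_Re[OF h]])
  moreover have "(\<integral>x. Im (g x) \<partial>M) = Im (integral\<^sup>L M g)"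
    by (rule has_bochner_integral_integral_eq[OF has_bochner_integral_Im[OF h]])
  ultimately show ?thesis by (simp add: complex_eq_iff)
qed

lemma selfsim_cintegral:
  fixes g :: "real \<Rightarrow> complex"
  assumes ss: "is_selfsim b1 b2 p M" and p: "0 \<le> p" "p \<le> 1"
  and g[measurable]: "g \<in> borel_measurable borel" and gb: "\<And>x. norm (g x) \<le> K"
  shows "(\<integral>x. g x \<partial>M) = of_real p * (\<integral>x. g (Tm b1 b2 True x) \<partial>M) + of_real (1 - p) * (\<integral>x. g (Tm b1 b2 False x) \<partial>M)"
proof -
  note b = selfsim_basic[OF ss]
  interpret prob_space M by (rule b(3))
  have mT: "Tm b1 b2 a \<in> borel_measurable M" for a using measurable_cong_sets[OF b(1) refl] Tm_meas by blast
  have gM: "g \<in> borel_measurable M" using measurable_cong_sets[OF b(1) refl] g by blast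
  have int: "integrable M (\<lambda>x. g (h x))" if h: "h \<in> borel_measurable M" for h
    by (rule integrable_const_bound[where B=K]) (use gb measurable_compose[OF h g] in auto)
  have int0: "integrable M g" by (rule integrable_const_bound[where B=K]) (use gb gM in auto)
  have Re: "(\<integral>x. Re (g x) \<partial>M) = p * (\<integral>x. Re (g (Tm b1 b2 True x)) \<partial>M) + (1 - p) * (\<integral>x. Re (g (Tm b1 b2 False x)) \<partial>M)"
    by (rule selfsim_integral[OF ss p, of "\<lambda>x. Re (g x)" K]) (auto intro: order_trans[OF abs_Re_le_cmod gb])
  have Im: "(\<integral>x. Im (g x) \<partial>M) = p * (\<integral>x. Im (g (Tm b1 b2 True x)) \<partial>M) + (1 - p) * (\<integral>x. Im (g (Tm b1 b2 False x)) \<partial>M)"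
    by (rule selfsim_integral[OF ss p, of "\<lambda>x. Im (g x)" K]) (auto intro: order_trans[OF abs_Im_le_cmod gb])
  show ?thesis
    using Re Im by (simp add: cint_ReIm[OF int0] cint_ReIm[OF int[OF mT]] complex_eq_iff)
qed

lemma selfsim_char:
  assumes ss: "is_selfsim b1 b2 p M" and p: "0 \<le> p" "p \<le> 1"
  shows "char M t = of_real p * iexp (t * b1) * char M (b1 * t) + of_real (1 - p) * iexp (- (t * b2)) * char M (b2 * t)"
proof -
  have "char M t = (\<integral>x. iexp (t * x) \<partial>M)" by (simp add: char_def)
  also have "\<dots> = of_real p * (\<integral>x. iexp (t * Tm b1 b2 True x) \<partial>M) + of_real (1 - p) * (\<integral>x. iexp (t * Tm b1 b2 False x) \<partial>M)"
    by (rule selfsim_cintegral[OF ss p, where K=1]) (auto simp: norm_exp_i_times)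
  also have "(\<lambda>x. iexp (t * Tm b1 b2 True x)) = (\<lambda>x. iexp (t * b1) * iexp ((b1 * t) * x))"
    by (rule ext) (simp add: Tm_def bt_def sg_def exp_add[symmetric] algebra_simps)
  also have "(\<lambda>x. iexp (t * Tm b1 b2 False x)) = (\<lambda>x. iexp (- (t * b2)) * iexp ((b2 * t) * x))"
    by (rule ext) (simp add: Tm_def bt_def sg_def exp_add[symmetric] algebra_simps)
  finally show ?thesis by (simp add: char_def mult.assoc)
qed


lemma selfsim_unique:
  assumes ss: "is_selfsim b1 b2 p M" and ss': "is_selfsim b1 b2 p M'"
  and b: "0 < b1" "b1 < 1" "0 < b2" "b2 < 1" and p: "0 \<le> p" "p \<le> 1"
  shows "M = M'"
proof -
  interpret M: real_distribution M by (rule selfsim_basic(4)[OF ss])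
  interpret M': real_distribution M' by (rule selfsim_basic(4)[OF ss'])
  define D where "D t = char M t - char M' t" for t
  have Deq: "D t = of_real p * iexp (t * b1) * D (b1 * t) + of_real (1 - p) * iexp (- (t * b2)) * D (b2 * t)" for t
    unfolding D_def selfsim_char[OF ss p, of t] selfsim_char[OF ss' p, of t]
    by (simp add: algebra_simps)
  have Dle: "cmod (D t) \<le> p * cmod (D (b1 * t)) + (1 - p) * cmod (D (b2 * t))" for t
  proof -
    have "cmod (D t) \<le> cmod (of_real p * iexp (t * b1) * D (b1 * t)) + cmod (of_real (1 - p) * iexp (- (t * b2)) * D (b2 * t))"
      unfolding Deq[of t] by (rule norm_triangle_ineq)
    also have "\<dots> = p * cmod (D (b1 * t)) + (1 - p) * cmod (D (b2 * t))"
    proof -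
      have n1: "cmod (complex_of_real (1 - p)) = 1 - p" using p by (simp only: norm_of_real)
      show ?thesis using p n1 by (simp add: norm_mult norm_exp_i_times)
    qed
    finally show ?thesis .
  qed
  have D0: "D 0 = 0" unfolding D_def by (simp add: M.char_zero M'.char_zero)
  have cont: "isCont D 0" unfolding D_def[abs_def] by (intro continuous_intros M.isCont_char M'.isCont_char)
  let ?r = "max b1 b2"
  have r: "0 < ?r" "?r < 1" using b by auto
  have Dz: "D t = 0" for t
  proof -
    have "cmod (D t) \<le> \<epsilon>" if \<epsilon>: "\<epsilon> > 0" for \<epsilon>
    proof -
      from cont have "D \<midarrow>0\<rightarrow> D 0" by (simp add: isCont_def)
      from metric_LIM_D[OF this \<epsilon>] obtain \<delta> where \<delta>: "\<delta> > 0"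
        and h: "\<And>u. u \<noteq> 0 \<and> dist u 0 < \<delta> \<Longrightarrow> dist (D u) (D 0) < \<epsilon>" by blast
      have claim: "\<forall>u. \<bar>u\<bar> * ?r ^ N < \<delta> \<longrightarrow> cmod (D u) \<le> \<epsilon>" for N
      proof (induction N)
        case 0
        show ?case
        proof (intro allI impI)
          fix u :: real assume u: "\<bar>u\<bar> * ?r ^ 0 < \<delta>"
          show "cmod (D u) \<le> \<epsilon>"
          proof (cases "u = 0")
            case True then show ?thesis using D0 \<epsilon> by simp
          next
            case False then show ?thesis using h[of u] u D0 by (simp add: dist_norm)
          qed
        qed
      next
        case (Suc N)
        show ?case
        proof (intro allI impI)
          fix u :: real assume u: "\<bar>u\<bar> * ?r ^ Suc N < \<delta>"
          have "\<bar>b1 * u\<bar> * ?r ^ N = b1 * (\<bar>u\<bar> * ?r ^ N)" using b by (simp add: abs_mult)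
          also have "\<dots> \<le> ?r * (\<bar>u\<bar> * ?r ^ N)" using r by (intro mult_right_mono) auto
          also have "\<dots> = \<bar>u\<bar> * ?r ^ Suc N" by simp
          finally have "\<bar>b1 * u\<bar> * ?r ^ N \<le> \<bar>u\<bar> * ?r ^ Suc N" .
          then have "\<bar>b1 * u\<bar> * ?r ^ N < \<delta>" using u by linarith
          then have 1: "cmod (D (b1 * u)) \<le> \<epsilon>" using Suc.IH by blast
          have "\<bar>b2 * u\<bar> * ?r ^ N = b2 * (\<bar>u\<bar> * ?r ^ N)" using b by (simp add: abs_mult)
          also have "\<dots> \<le> ?r * (\<bar>u\<bar> * ?r ^ N)" using r by (intro mult_right_mono) auto
          also have "\<dots> = \<bar>u\<bar> * ?r ^ Suc N" by simp
          finally have "\<bar>b2 * u\<bar> * ?r ^ N \<le> \<bar>u\<bar> * ?r ^ Suc N" .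
          then have "\<bar>b2 * u\<bar> * ?r ^ N < \<delta>" using u by linarith
          then have 2: "cmod (D (b2 * u)) \<le> \<epsilon>" using Suc.IH by blast
          have "cmod (D u) \<le> p * cmod (D (b1 * u)) + (1 - p) * cmod (D (b2 * u))" by (rule Dle)
          also have "\<dots> \<le> p * \<epsilon> + (1 - p) * \<epsilon>" using 1 2 p by (intro add_mono mult_left_mono) auto
          finally show "cmod (D u) \<le> \<epsilon>" by (simp add: algebra_simps)
        qed
      qed
      have "(\<lambda>N. \<bar>t\<bar> * ?r ^ N) \<longlonglongrightarrow> \<bar>t\<bar> * 0" using r by (intro tendsto_mult tendsto_const LIMSEQ_power_zero) auto
      then have "eventually (\<lambda>N. \<bar>t\<bar> * ?r ^ N < \<delta>) sequentially" using \<delta> by (intro order_tendstoD(2)) auto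
      then obtain N where "\<bar>t\<bar> * ?r ^ N < \<delta>" by (auto simp: eventually_sequentially)
      then show ?thesis using claim by blast
    qed
    then have "cmod (D t) \<le> 0 + 0" by (rule field_le_epsilon) simp
    then show ?thesis by simp
  qed
  have "char M = char M'" using Dz unfolding D_def by (auto simp: fun_eq_iff)
  then show ?thesis by (rule Levy_uniqueness[OF M.real_distribution_axioms M'.real_distribution_axioms])
qed

lemma selfsim_measure_eq:
  assumes b: "0 < b1" "b1 < 1" "0 < b2" "b2 < 1" and p: "0 \<le> p" "p \<le> 1"
  shows "selfsim_measure b1 b2 p = mu0 b1 b2 p"
  unfolding selfsim_measure_def
proof (rule the_equality)
  show "is_selfsim b1 b2 p (mu0 b1 b2 p)" by (rule mu0_selfsim[OF b p])
  fix M assume "is_selfsim b1 b2 p M"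
  then show "M = mu0 b1 b2 p" by (rule selfsim_unique[OF _ mu0_selfsim[OF b p] b p])
qed


lemma Rho_prod_list: "Rho rh w = prod_list (map rh w)"
  by (induction w) auto

lemma sharp_Suc: "sharp s (Suc k) = sharp s k + (if s (Suc k) = 1 then 1 else 0)"
proof -
  have "{j \<in> {1..Suc k}. s j = 1} = {j \<in> {1..k}. s j = 1} \<union> (if s (Suc k) = 1 then {Suc k} else {})"
    by (auto simp: le_Suc_eq)
  then show ?thesis unfolding sharp_def by (simp add: card_insert_if)
qed

lemma sharp_le: "sharp s k \<le> k"
proof -
  have "sharp s k \<le> card {1..k}" unfolding sharp_def by (rule card_mono) auto
  then show ?thesis by simp
qed

lemma sharp_0: "sharp s 0 = 0" by (simp add: sharp_def)

lemma sharp_tilde_Suc: "sharp_tilde s (Suc k) = sharp_tilde s k + (if s (Suc k) = 1 then 0 else 1)"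
  using sharp_le[of s k] unfolding sharp_tilde_def by (simp add: sharp_Suc)

definition wd :: "(nat \<Rightarrow> int) \<Rightarrow> nat \<Rightarrow> bool list" where
  "wd s k = map (\<lambda>j. s j = 1) [1..<Suc k]"

lemma wd_Suc: "wd s (Suc k) = wd s k @ [s (Suc k) = 1]"
  by (simp add: wd_def)

lemma wd_len: "length (wd s k) = k" by (simp add: wd_def)

lemma Rho_wd: "Rho (bt x y) (wd s k) = x ^ sharp s k * y ^ sharp_tilde s k"
proof (induction k)
  case 0 then show ?case by (simp add: wd_def sharp_0 sharp_tilde_def)
next
  case (Suc k)
  then show ?case by (simp add: wd_Suc Rho_snoc sharp_Suc sharp_tilde_Suc bt_def)
qed

lemma Off_wd:
  assumes "\<forall>j\<in>{1..n}. s j \<in> {-1, 1}" "k \<le> n"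
  shows "Off (bt b1 b2) (\<lambda>a. bt b1 b2 a * sg a) (wd s k) =
         (\<Sum>j = 1..k. real_of_int (s j) * b1 ^ sharp s j * b2 ^ sharp_tilde s j)"
  using assms(2)
proof (induction k)
  case 0 then show ?case by (simp add: wd_def)
next
  case (Suc k)
  have sv: "s (Suc k) \<in> {-1, 1}" using assms(1) Suc.prems by auto
  have "Off (bt b1 b2) (\<lambda>a. bt b1 b2 a * sg a) (wd s (Suc k)) =
        Off (bt b1 b2) (\<lambda>a. bt b1 b2 a * sg a) (wd s k) + Rho (bt b1 b2) (wd s k) * bt b1 b2 (s (Suc k) = 1) * sg (s (Suc k) = 1)"
    by (simp add: wd_Suc Off_snoc mult.assoc)
  also have "Rho (bt b1 b2) (wd s k) * bt b1 b2 (s (Suc k) = 1) = b1 ^ sharp s (Suc k) * b2 ^ sharp_tilde s (Suc k)"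
    using Rho_wd[of b1 b2 s "Suc k"] by (simp add: wd_Suc Rho_snoc)
  also have "sg (s (Suc k) = 1) = real_of_int (s (Suc k))" using sv by (auto simp: sg_def)
  finally show ?case using Suc by (simp add: mult_ac)
qed


definition pw :: "real \<Rightarrow> bool list \<Rightarrow> real" where "pw p w = prod_list (map (pa p) w)"

lemma sum_words_Suc:
  "(\<Sum>w\<in>words C (Suc k). f w) = (\<Sum>a\<in>C. \<Sum>w\<in>words C k. f (a # w))"
proof -
  have "(\<Sum>w\<in>words C (Suc k). f w) = (\<Sum>x\<in>C \<times> words C k. f ((\<lambda>(c,w). c#w) x))"
    unfolding words_Suc by (rule sum.reindex[OF words_Suc_inj, unfolded comp_def])
  also have "\<dots> = (\<Sum>a\<in>C. \<Sum>w\<in>words C k. f (a # w))"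
    by (simp add: sum.cartesian_product split_def)
  finally show ?thesis .
qed

lemma sum_pw: "(\<Sum>w\<in>words UNIV k. pw p w) = 1"
  using sum_words_prod[of "UNIV::bool set" "pa p" k] by (simp add: pw_def UNIV_bool pa_def)

lemma pw_Cons: "pw p (a # w) = pa p a * pw p w" by (simp add: pw_def)

lemma sum_pw_add:
  "(\<Sum>w\<in>words (UNIV::bool set) k. pw p w * sum_list (map h w)) = real k * (p * h True + (1-p) * h False)"
proof (induction k)
  case 0 then show ?case by (simp add: words_0)
next
  case (Suc k)
  have e: "(\<Sum>w\<in>words UNIV k. pw p (a # w) * sum_list (map h (a # w))) =
        pa p a * h a + pa p a * (real k * (p * h True + (1-p) * h False))" for a
  proof -
    have "(\<Sum>w\<in>words UNIV k. pw p (a # w) * sum_list (map h (a # w))) =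
          (\<Sum>w\<in>words UNIV k. pa p a * h a * pw p w + pa p a * (pw p w * sum_list (map h w)))"
      by (rule sum.cong) (auto simp: pw_Cons algebra_simps)
    also have "\<dots> = pa p a * h a * (\<Sum>w\<in>words UNIV k. pw p w) + pa p a * (\<Sum>w\<in>words UNIV k. pw p w * sum_list (map h w))"
      by (simp add: sum.distrib sum_distrib_left)
    finally show ?thesis using Suc by (simp add: sum_pw)
  qed
  show ?case unfolding sum_words_Suc e by (simp add: UNIV_bool pa_def algebra_simps)
qed

lemma ln_prod_list: "(\<And>a. a \<in> set w \<Longrightarrow> 0 < (g a::real)) \<Longrightarrow> ln (prod_list (map g w)) = sum_list (map (\<lambda>a. ln (g a)) w)"
proof (induction w)
  case Nil then show ?case by simp
next
  case (Cons a w)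
  have h1: "0 < prod_list (map g w)" using Cons.prems by (intro prod_list_pos) auto
  have h2: "0 < g a" using Cons.prems by auto
  have ih: "ln (prod_list (map g w)) = sum_list (map (\<lambda>a. ln (g a)) w)" using Cons by auto
  have "ln (prod_list (map g (a#w))) = ln (g a * prod_list (map g w))" by simp
  also have "\<dots> = ln (g a) + ln (prod_list (map g w))" using h1 h2 by (simp add: ln_mult)
  finally show ?case using ih by simp
qed

lemma entropy_pw:
  assumes "0 < p" "p < 1"
  shows "(\<Sum>w\<in>words UNIV k. pw p w * ln (pw p w)) = real k * (p * ln p + (1 - p) * ln (1 - p))"
proof -
  have "(\<Sum>w\<in>words UNIV k. pw p w * ln (pw p w)) = (\<Sum>w\<in>words UNIV k. pw p w * sum_list (map (\<lambda>a. ln (pa p a)) w))"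
    using assms by (intro sum.cong refl) (simp add: pw_def ln_prod_list pa_def)
  also have "\<dots> = real k * (p * ln p + (1 - p) * ln (1 - p))" by (simp add: sum_pw_add pa_def)
  finally show ?thesis .
qed

lemma lyap_pw:
  assumes "0 < b1" "0 < b2"
  shows "(\<Sum>w\<in>words UNIV k. pw p w * ln (Rho (bt b1 b2) w)) = real k * (p * ln b1 + (1 - p) * ln b2)"
proof -
  have "(\<Sum>w\<in>words UNIV k. pw p w * ln (Rho (bt b1 b2) w)) = (\<Sum>w\<in>words UNIV k. pw p w * sum_list (map (\<lambda>a. ln (bt b1 b2 a)) w))"
    using assms by (intro sum.cong refl) (simp add: Rho_prod_list ln_prod_list bt_def)
  also have "\<dots> = real k * (p * ln b1 + (1 - p) * ln b2)" by (simp add: sum_pw_add bt_def)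
  finally show ?thesis .
qed


lemma choose_p:
  fixes b1 b2 :: real and a n :: nat
  assumes b: "0 < b1" "b1 < 1" "0 < b2" "b2 < 1" "b1 + b2 > 1" and n: "n > 0"
  shows "\<exists>p. 0 < p \<and> p < 1 \<and>
     0 < - (p * ln p) - (1 - p) * ln (1 - p) + p * ln b1 + (1 - p) * ln b2 \<and>
     - (p * ln p) - (1 - p) * ln (1 - p) + p * ln b1 + (1 - p) * ln b2 < 2 * ln 2 * p ^ a * (1 - p) ^ (n - a) / n"
proof -
  define F where "F p = - (p * ln p) - (1 - p) * ln (1 - p) + p * ln b1 + (1 - p) * ln b2" for p :: real
  define g where "g p = 2 * ln 2 * p ^ a * (1 - p) ^ (n - a) / n" for p :: real
  define G where "G p = F p - g p / 2" for p
  define ps where "ps = b1 / (b1 + b2)"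
  have ps: "0 < ps" "ps < 1" using b by (auto simp: ps_def field_simps)
  have gpos: "0 < g p" if "0 < p" "p < 1" for p using that n by (simp add: g_def)
  have Fps: "F ps = ln (b1 + b2)"
  proof -
    have "1 - ps = b2 / (b1 + b2)" using b by (simp add: ps_def field_simps)
    then have l2: "ln (1 - ps) = ln b2 - ln (b1 + b2)" using b by (simp add: ln_div)
    have l1: "ln ps = ln b1 - ln (b1 + b2)" using b by (simp add: ps_def ln_div)
    show ?thesis unfolding F_def l1 l2 by (simp add: algebra_simps)
  qed
  have Fps_pos: "0 < F ps" using b Fps by simp
  show ?thesis
  proof (cases "G ps \<le> 0")
    case True
    then have "F ps < g ps" using gpos[OF ps] by (simp add: G_def)
    then show ?thesis using ps Fps_pos by (auto simp: F_def g_def)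
  next
    case False
    have xl: "((\<lambda>p::real. p * ln p) \<longlongrightarrow> 0) (at_right 0)" by real_asymp
    have "(F \<longlongrightarrow> - 0 - (1 - 0) * ln (1 - 0) + 0 * ln b1 + (1 - 0) * ln b2) (at_right 0)"
      unfolding F_def[abs_def] by (intro tendsto_intros xl) auto
    then have "(F \<longlongrightarrow> ln b2) (at_right 0)" by simp
    moreover have "ln b2 < 0" using b by simp
    ultimately have "eventually (\<lambda>p. F p < 0) (at_right 0)" by (intro order_tendstoD(2)) auto
    then obtain bb where bb: "bb > 0" "\<And>y. y > 0 \<Longrightarrow> y < bb \<Longrightarrow> F y < 0"
      unfolding eventually_at_right_field by auto
    define e where "e = min bb ps / 2"
    have e: "0 < e" "e < ps" using bb ps by (auto simp: e_def)
    have Fe: "F e < 0" using bb e by (auto simp: e_def)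
    have Ge: "G e \<le> 0" using Fe gpos[of e] e ps by (simp add: G_def)
    have cont: "continuous_on {e..ps} G"
      unfolding G_def[abs_def] F_def[abs_def] g_def[abs_def]
      using e ps n by (auto intro!: continuous_intros)
    obtain x where x: "e \<le> x" "x \<le> ps" "G x = 0"
      using IVT'[of G e 0 ps, OF Ge _ _ cont] False e by auto
    have x01: "0 < x" "x < 1" using x e ps by auto
    have "F x = g x / 2" using x by (simp add: G_def)
    then have "0 < F x" "F x < g x" using gpos[OF x01] by auto
    then show ?thesis using x01 by (auto simp: F_def g_def)
  qed
qed


theorem theorem1p2:
  fixes n :: nat and s t :: "nat \<Rightarrow> int" and b1 b2 :: real
  assumes "n \<ge> 3"
    and "\<forall>k \<in> {1..n}. s k \<in> {-1, 1}"
    and "\<forall>k \<in> {1..n}. t k \<in> {-1, 1}"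
    and "\<exists>k \<in> {1..n}. s k \<noteq> t k"
    and "sharp s n = sharp t n"
    and "0 < b1" "b1 < 1" "0 < b2" "b2 < 1"
    and "b1 + b2 > 1"
    and "(\<Sum>k = 1..n. real_of_int (s k) * b1 ^ sharp s k * b2 ^ sharp_tilde s k
                      - real_of_int (t k) * b1 ^ sharp t k * b2 ^ sharp_tilde t k) = 0"
  shows "\<exists>p. 0 < p \<and> p < 1 \<and> sim_dim b1 b2 p > 1
           \<and> singular_lebesgue (selfsim_measure b1 b2 p)
           \<and> hausdorff_dim_measure (selfsim_measure b1 b2 p) < 1"
proof -
  note b = assms(6-9)
  have n0: "n > 0" using assms(1) by simp
  define a where "a = sharp s n"
  obtain p where p: "0 < p" "p < 1"
    and Fpos: "0 < - (p * ln p) - (1 - p) * ln (1 - p) + p * ln b1 + (1 - p) * ln b2"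
    and Flt: "- (p * ln p) - (1 - p) * ln (1 - p) + p * ln b1 + (1 - p) * ln b2 < 2 * ln 2 * p ^ a * (1 - p) ^ (n - a) / n"
    using choose_p[OF b assms(10) n0, of a] by blast
  define H where "H = - p * ln p - (1 - p) * ln (1 - p)"
  define chi where "chi = - p * ln b1 - (1 - p) * ln b2"
  define P where "P = p ^ a * (1 - p) ^ (n - a)"
  have chi_pos: "chi > 0"
  proof -
    have "ln b1 < 0" "ln b2 < 0" using b by auto
    then have "p * ln b1 < 0" "(1 - p) * ln b2 < 0" using p by (auto simp: mult_pos_neg)
    then show ?thesis unfolding chi_def by simp
  qed
  have HF: "H - chi = - (p * ln p) - (1 - p) * ln (1 - p) + p * ln b1 + (1 - p) * ln b2"
    unfolding H_def chi_def by simp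
  have Ppos: "P > 0" using p by (simp add: P_def)
  have HcP: "n * H - 2 * P * ln 2 < n * chi"
  proof -
    have "H - chi < 2 * ln 2 * P / n" using Flt HF by (simp add: P_def)
    then have "n * (H - chi) < 2 * ln 2 * P" using n0 by (simp add: field_simps)
    then show ?thesis by (simp add: algebra_simps)
  qed
  have sd: "sim_dim b1 b2 p > 1"
  proof -
    have "H > chi" using Fpos HF by simp
    then have "H / chi > 1" using chi_pos by simp
    then show ?thesis by (simp add: sim_dim_def H_def chi_def)
  qed
  define u where "u = wd s n"
  define v where "v = wd t n"
  define W where "W = words (UNIV::bool set) n"
  have uW: "u \<in> W" and vW: "v \<in> W" by (auto simp: u_def v_def W_def words_def wd_len)
  have uv: "u \<noteq> v"
  proof
    assume "u = v"
    obtain k where k: "k \<in> {1..n}" "s k \<noteq> t k" using assms(4) by blast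
    have "u ! (k - 1) = (s k = 1)" "v ! (k - 1) = (t k = 1)" using k by (auto simp del: upt_Suc simp add: u_def v_def wd_def nth_upt)
    moreover have "(s k = 1) \<noteq> (t k = 1)"
    proof -
      have "s k \<in> {-1, 1}" "t k \<in> {-1, 1}" using k assms(2,3) by auto
      then show ?thesis using k(2) by auto
    qed
    ultimately show False using \<open>u = v\<close> by simp
  qed
  have tl_eq: "sharp_tilde s n = sharp_tilde t n" using assms(5) by (simp add: sharp_tilde_def)
  have Rho_uv: "Rho (bt b1 b2) u = Rho (bt b1 b2) v"
    unfolding u_def v_def Rho_wd using assms(5) tl_eq by simp
  have Off_uv: "Off (bt b1 b2) (\<lambda>a. bt b1 b2 a * sg a) u = Off (bt b1 b2) (\<lambda>a. bt b1 b2 a * sg a) v"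
    unfolding u_def v_def using Off_wd[OF assms(2) order_refl] Off_wd[OF assms(3) order_refl] assms(11)
    by (simp add: sum_subtractf)
  have pa_bt: "pa p = bt p (1 - p)" by (auto simp: pa_def bt_def fun_eq_iff)
  have pw_wd: "pw p (wd r n) = p ^ sharp r n * (1 - p) ^ sharp_tilde r n" for r
    unfolding pw_def pa_bt Rho_prod_list[symmetric] by (rule Rho_wd)
  have pw_u: "pw p u = P" unfolding u_def pw_wd P_def a_def sharp_tilde_def by simp
  have pw_v: "pw p v = P" unfolding v_def pw_wd P_def a_def sharp_tilde_def using assms(5) by simp
  have pw_pos: "pw p w > 0" for w unfolding pw_def using p by (intro prod_list_pos) (auto simp: pa_def)
  define C where "C = W - {v}"
  define q where "q c = (if c = u then 2 * pw p u else pw p c)" for c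
  define rh where "rh c = Rho (bt b1 b2) c" for c
  define tr where "tr c = Off (bt b1 b2) (\<lambda>a. bt b1 b2 a * sg a) c" for c
  have finW: "finite W" unfolding W_def by (rule finite_words) simp
  have finC: "finite C" unfolding C_def using finW by simp
  have uC: "u \<in> C" using uW uv by (simp add: C_def)
  have qpos: "q c > 0" for c using pw_pos by (simp add: q_def)
  have split_gen: "(\<Sum>c\<in>C. F c) = (\<Sum>w\<in>W. G w)"
    if FG: "\<And>c. c \<in> C \<Longrightarrow> c \<noteq> u \<Longrightarrow> F c = G c" "F u = G u + G u" "G v = G u"
    for F G :: "bool list \<Rightarrow> 'x::comm_monoid_add"
  proof -
    have "(\<Sum>c\<in>C. F c) = F u + (\<Sum>c\<in>C - {u}. F c)" using finC uC by (rule sum.remove)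
    also have "(\<Sum>c\<in>C - {u}. F c) = (\<Sum>c\<in>C - {u}. G c)" using FG(1) by (intro sum.cong) auto
    finally have 1: "(\<Sum>c\<in>C. F c) = F u + (\<Sum>c\<in>C - {u}. G c)" .
    have "(\<Sum>w\<in>W. G w) = G v + (\<Sum>w\<in>W - {v}. G w)" using finW vW by (rule sum.remove)
    also have "(\<Sum>w\<in>W - {v}. G w) = G u + (\<Sum>c\<in>C - {u}. G c)"
      unfolding C_def[symmetric] using finC uC by (rule sum.remove)
    finally show ?thesis using 1 FG(2,3) by (simp add: add_ac)
  qed
  have sumq: "(\<Sum>c\<in>C. q c) = 1"
  proof -
    have "(\<Sum>c\<in>C. q c) = (\<Sum>w\<in>W. pw p w)"
      by (rule split_gen) (auto simp: q_def pw_u pw_v)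
    then show ?thesis unfolding W_def sum_pw .
  qed
  have rh01: "0 < rh c \<and> rh c < 1" if c: "c \<in> C" for c
  proof -
    have cW: "set c \<subseteq> UNIV" "length c = n" using c by (auto simp: C_def W_def words_def)
    have "0 < rh c \<and> rh c \<le> max b1 b2 ^ n"
      using Rho_bounds[of c UNIV "bt b1 b2" "max b1 b2"] cW b unfolding rh_def by (auto simp: bt_def)
    moreover have "max b1 b2 ^ n < 1" using b n0 by (intro power_less_one_iff[THEN iffD2]) auto
    ultimately show ?thesis by linarith
  qed
  have rh_uv: "rh v = rh u" using Rho_uv by (simp add: rh_def)
  have tr_uv: "tr v = tr u" using Off_uv by (simp add: tr_def)
  define M where "M = selfsim_measure b1 b2 p"
  have M0: "M = mu0 b1 b2 p" unfolding M_def using b p by (intro selfsim_measure_eq) auto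
  have ss: "is_selfsim b1 b2 p M" unfolding M0 using b p by (intro mu0_selfsim) auto
  note Mb = selfsim_basic[OF ss]
  have Mprob: "emeasure M UNIV = 1" using prob_space.emeasure_space_1[OF Mb(3)] Mb(2) by simp
  define R where "R = max b1 b2 / (1 - max b1 b2)"
  have Rpos: "R > 0" using b by (auto simp: R_def)
  have MI: "emeasure M {-R..R} = 1" unfolding M0 R_def by (rule mu0_support[OF b])
  have rec: "emeasure M A = (\<Sum>c\<in>C. ennreal (q c) * emeasure M ((\<lambda>x. rh c * x + tr c) -` A))"
    if A: "A \<in> sets borel" for A
  proof -
    have "emeasure M A = (\<Sum>w\<in>words UNIV n. ennreal (prod_list (map (pa p) w)) *
        emeasure M ((\<lambda>x. Rho (bt b1 b2) w * x + Off (bt b1 b2) (\<lambda>a. bt b1 b2 a * sg a) w) -` A))"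
    proof (rule iterate_selfsim[where C=UNIV and q="pa p" and rh="bt b1 b2" and tr="\<lambda>a. bt b1 b2 a * sg a", OF Mb(1) _ _ _ A])
      show "finite (UNIV :: bool set)" by simp
      show "0 \<le> pa p c" for c using p by (simp add: pa_def)
      show "emeasure M B = (\<Sum>c\<in>UNIV. ennreal (pa p c) * emeasure M ((\<lambda>x. bt b1 b2 c * x + bt b1 b2 c * sg c) -` B))"
        if "B \<in> sets borel" for B by (rule selfsim_rec[OF ss that])
    qed
    also have "\<dots> = (\<Sum>w\<in>W. ennreal (pw p w) * emeasure M ((\<lambda>x. rh w * x + tr w) -` A))"
      by (simp add: W_def pw_def rh_def tr_def)
    also have "\<dots> = (\<Sum>c\<in>C. ennreal (q c) * emeasure M ((\<lambda>x. rh c * x + tr c) -` A))"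
    proof (rule split_gen[symmetric])
      show "ennreal (q c) * emeasure M ((\<lambda>x. rh c * x + tr c) -` A) = ennreal (pw p c) * emeasure M ((\<lambda>x. rh c * x + tr c) -` A)"
        if "c \<in> C" "c \<noteq> u" for c using that by (simp add: q_def)
      have "ennreal (q u) = ennreal (pw p u) + ennreal (pw p u)"
        using pw_pos[of u] by (simp add: q_def ennreal_plus[symmetric])
      then show "ennreal (q u) * emeasure M ((\<lambda>x. rh u * x + tr u) -` A) =
          ennreal (pw p u) * emeasure M ((\<lambda>x. rh u * x + tr u) -` A) + ennreal (pw p u) * emeasure M ((\<lambda>x. rh u * x + tr u) -` A)"
        by (simp add: distrib_right)
      show "ennreal (pw p v) * emeasure M ((\<lambda>x. rh v * x + tr v) -` A) = ennreal (pw p u) * emeasure M ((\<lambda>x. rh u * x + tr u) -` A)"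
        using rh_uv tr_uv pw_u pw_v by simp
    qed
    finally show ?thesis .
  qed
  have lyap: "(\<Sum>c\<in>C. q c * ln (rh c)) = - (n * chi)"
  proof -
    have "(\<Sum>c\<in>C. q c * ln (rh c)) = (\<Sum>w\<in>W. pw p w * ln (Rho (bt b1 b2) w))"
      by (rule split_gen) (auto simp: q_def rh_def Rho_uv pw_u pw_v algebra_simps)
    also have "\<dots> = n * (p * ln b1 + (1 - p) * ln b2)" unfolding W_def using b by (intro lyap_pw) auto
    finally show ?thesis by (simp add: chi_def algebra_simps)
  qed
  have entr: "(\<Sum>c\<in>C. q c * ln (q c)) = - (n * H) + 2 * P * ln 2"
  proof -
    have "(\<Sum>c\<in>C. q c * ln (q c) - (if c = u then 2 * P * ln 2 else 0)) = (\<Sum>w\<in>W. pw p w * ln (pw p w))"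
    proof (rule split_gen)
      show "q c * ln (q c) - (if c = u then 2 * P * ln 2 else 0) = pw p c * ln (pw p c)" if "c \<in> C" "c \<noteq> u" for c
        using that by (simp add: q_def)
      have "q u * ln (q u) = 2 * P * (ln 2 + ln P)" using Ppos by (simp add: q_def pw_u ln_mult)
      then show "q u * ln (q u) - (if u = u then 2 * P * ln 2 else 0) = pw p u * ln (pw p u) + pw p u * ln (pw p u)"
        by (simp add: pw_u algebra_simps)
      show "pw p v * ln (pw p v) = pw p u * ln (pw p u)" using pw_u pw_v by simp
    qed
    also have "\<dots> = n * (p * ln p + (1 - p) * ln (1 - p))" unfolding W_def using p by (intro entropy_pw) auto
    finally have "(\<Sum>c\<in>C. q c * ln (q c)) - 2 * P * ln 2 = n * (p * ln p + (1 - p) * ln (1 - p))"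
      using finC uC by (simp add: sum_subtractf)
    then show ?thesis by (simp add: H_def algebra_simps)
  qed
  have nchi: "n * chi > 0" using n0 chi_pos by simp
  define s0 where "s0 = (n * H - 2 * P * ln 2) / (n * chi)"
  have s0_lt: "s0 < 1" using HcP nchi by (simp add: s0_def divide_less_eq)
  define sx where "sx = (max s0 0 + 1) / 2"
  have sx: "0 < sx" "sx < 1" "s0 < sx" using s0_lt by (auto simp: sx_def)
  have dneg: "n * H - 2 * P * ln 2 - sx * (n * chi) < 0"
  proof -
    have "s0 * (n * chi) < sx * (n * chi)" using sx(3) nchi by (intro mult_strict_right_mono)
    moreover have "s0 * (n * chi) = n * H - 2 * P * ln 2" using n0 chi_pos by (simp add: s0_def)
    ultimately show ?thesis by simp
  qed
  define K where "K c = sx * ln (rh c) - ln (q c)" for c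
  define f where "f \<theta> = (\<Sum>c\<in>C. q c * exp (\<theta> * K c))" for \<theta>
  have deriv: "(f has_real_derivative (\<Sum>c\<in>C. q c * K c)) (at 0)"
    unfolding f_def[abs_def]
  proof (rule DERIV_sum)
    fix c show "((\<lambda>x. q c * exp (x * K c)) has_real_derivative q c * K c) (at 0)"
      by (auto intro!: derivative_eq_intros)
  qed
  have dval: "(\<Sum>c\<in>C. q c * K c) < 0"
  proof -
    have "(\<Sum>c\<in>C. q c * K c) = sx * (\<Sum>c\<in>C. q c * ln (rh c)) - (\<Sum>c\<in>C. q c * ln (q c))"
      by (simp add: K_def algebra_simps sum_subtractf sum_distrib_left)
    also have "\<dots> = n * H - 2 * P * ln 2 - sx * (n * chi)" unfolding lyap entr by (simp add: algebra_simps)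
    finally show ?thesis using dneg by simp
  qed
  obtain d where d: "d > 0" "\<And>h. h > 0 \<Longrightarrow> h < d \<Longrightarrow> f (0 + h) < f 0"
    using DERIV_neg_dec_right[OF deriv dval] by blast
  define \<theta> where "\<theta> = d / 2"
  have th: "0 < \<theta>" using d by (simp add: \<theta>_def)
  have f0: "f 0 = 1" using sumq by (simp add: f_def)
  have fth: "f \<theta> < 1" using d(2)[of \<theta>] d(1) f0 by (simp add: \<theta>_def)
  have phi: "(\<Sum>c\<in>C. q c powr (1-\<theta>) * rh c powr (sx*\<theta>)) < 1"
  proof -
    have "(\<Sum>c\<in>C. q c powr (1-\<theta>) * rh c powr (sx*\<theta>)) = f \<theta>" unfolding f_def
    proof (rule sum.cong[OF refl])
      fix c assume c: "c \<in> C"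
      have qc: "q c > 0" by (rule qpos)
      have rc: "rh c > 0" using rh01[OF c] by simp
      have "q c powr (1-\<theta>) * rh c powr (sx*\<theta>) = exp ((1-\<theta>) * ln (q c) + sx*\<theta> * ln (rh c))"
        using qc rc by (simp add: powr_def exp_add)
      also have "(1-\<theta>) * ln (q c) + sx*\<theta> * ln (rh c) = ln (q c) + \<theta> * K c" by (simp add: K_def algebra_simps)
      also have "exp (ln (q c) + \<theta> * K c) = q c * exp (\<theta> * K c)" using qc by (simp add: exp_add)
      finally show "q c powr (1-\<theta>) * rh c powr (sx*\<theta>) = q c * exp (\<theta> * K c)" .
    qed
    then show ?thesis using fth by simp
  qed
  obtain A where A: "A \<in> sets borel" "emeasure M A = 1" "hausdorff_measure sx A = 0" "emeasure lborel A = 0"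
    using abstract_drop[OF Mb(1) Mprob Rpos MI finC _ sumq rh01 rec sx(1) _ th phi] qpos sx(2) by force
  have sing: "singular_lebesgue M"
    unfolding singular_lebesgue_def
  proof (intro bexI conjI)
    show "UNIV - A \<in> sets borel" using A(1) by auto
    have "emeasure M (UNIV - A) = emeasure M UNIV - emeasure M A"
      using A Mb(1,2) by (intro emeasure_Diff) auto
    then show "emeasure M (UNIV - A) = 0" using A(2) Mprob by simp
    show "emeasure lborel (UNIV - (UNIV - A)) = 0" using A(4) by (simp add: Diff_Diff_Int)
  qed
  have dim: "hausdorff_dim_measure M < 1"
  proof -
    have "hausdorff_dim_measure M \<le> hausdorff_dim A"
      unfolding hausdorff_dim_measure_def using A(1,2) by (intro Inf_lower) blast
    also have "hausdorff_dim A \<le> ereal sx"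
      unfolding hausdorff_dim_def using A(3) sx(1) by (intro Inf_lower) auto
    also have "ereal sx < 1" using sx(2) by simp
    finally show ?thesis .
  qed
  show ?thesis using p sd sing dim unfolding M_def by blast
qed


end
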